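(* Let $0<\phi<\pi/6$. For every $p\in\mathcal S_\phi$ and $t\in[0,T]$, the inverse Laplace transforms $B_{j,k}=\mathcal L^{-1}b_{j,k}$ and $R=\mathcal L^{-1}r$ satisfy $$|B_{j,k}(p,t)|<\frac{C_1(\phi,\alpha_j)}{\Gamma(\alpha_j+k\beta)}A_b(T)|p|^{k\beta+\alpha_j-1}e^{2\rho_0|p|},\qquad |R(p,t)|<\frac{C_2(\phi)}{\Gamma(\alpha_r)}A_r(T)|p|^{\alpha_r-1}e^{2\rho_0|p|},$$ where $C_1$ depends only on $\phi,\alpha_j$ and $C_2$ only on $\phi$.
   Context: Let $\rho_0>0$, $T>0$, $\mathcal D_{\rho_0}=\{(y,t):\arg y\in(-2\pi/3,2\pi/3),|y|>\rho_0,0\le t\le T\}$. $r(y,t)$ is analytic in $y$ on $\mathcal D_{\rho_0}$ with $|y^{\alpha_r}r(y,t)|<A_r(T)$, $\alpha_r\ge1$. For $j=0,\dots,3$, $k\ge0$, $b_{j,k}(y,t)$ is analytic in $y$ on $\mathcal D_{\rho_0}$ with $|y^{\alpha_j+k\beta}b_{j,k}(y,t)|<A_b(T)$, where $\beta,\alpha_j>0$ and $A_b(T)$ is independent of $j,k$. $\mathcal S_\phi=\{p:\arg p\in(-\phi,\phi),0<|p|<\infty\}$. Inverse Laplace transform: $\mathcal L^{-1}g(p,t)=\frac1{2\pi i}\int_{\mathcal C}e^{py}g(y,t)\,dy$ with $\mathcal C=\{c+ire^{i\phi'\,\mathrm{sgn}(r)}:r\in\mathbb R\}$, $c$ large, $\phi<\phi'<\pi/6$,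 traversed with $r$ increasing. *)

theory Defs
  imports "HOL-Complex_Analysis.Complex_Analysis"
begin

text \<open>The y-domain of D_rho0 (for fixed t): arg y in (-2pi/3, 2pi/3), |y| > rho0.\<close>
definition sector_dom :: "real \<Rightarrow> complex set" where
  "sector_dom \<rho>0 = {y. cmod y > \<rho>0 \<and> \<bar>Arg y\<bar> < 2 * pi / 3}"

definition S_sector :: "real \<Rightarrow> complex set" where
  "S_sector \<phi> = {p. p \<noteq> 0 \<and> \<bar>Arg p\<bar> < \<phi>}"

definition ilt_path :: "real \<Rightarrow> real \<Rightarrow> real \<Rightarrow> complex" where
  "ilt_path \<phi>' c r = of_real c + \<i> * of_real r * exp (\<i> * of_real (\<phi>' * sgn r))"

definition ilt_path_deriv :: "real \<Rightarrow> real \<Rightarrow> complex" where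
  "ilt_path_deriv \<phi>' r = \<i> * exp (\<i> * of_real (\<phi>' * sgn r))"

definition ILT :: "real \<Rightarrow> real \<Rightarrow> (complex \<Rightarrow> complex) \<Rightarrow> complex \<Rightarrow> complex" where
  "ILT \<phi>' c g p = (1 / (2 * of_real pi * \<i>)) *
     integral (UNIV :: real set)
       (\<lambda>r. exp (p * ilt_path \<phi>' c r) * g (ilt_path \<phi>' c r) * ilt_path_deriv \<phi>' r)"

end

theory Submission
  imports Defs "HOL-Real_Asymp.Real_Asymp"
begin

definition ray_int :: "complex \<Rightarrow> (complex \<Rightarrow> complex) \<Rightarrow> complex \<Rightarrow> complex \<Rightarrow> complex" where
  "ray_int p g a w = integral {0..} (\<lambda>r. exp (p * (a + of_real r * w)) * g (a + of_real r * w) * w)"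

lemma line_deriv:
  fixes a d :: complex
  shows "((\<lambda>z. a + z * d) has_field_derivative d) (at x)"
proof -
  have "((\<lambda>z. a + z * d) has_field_derivative (0 + 1 * d)) (at x)"
    by (rule DERIV_add[OF DERIV_const DERIV_cmult_right[OF DERIV_ident]])
  then show ?thesis by (simp only: add_0_left mult_1_left)
qed
lemma line_vderiv:
  fixes a d :: complex
  shows "((\<lambda>t. a + of_real t * d) has_vector_derivative d) (at t)"
  by (rule has_vector_derivative_real_field[OF line_deriv])

lemma line_ftc:
  fixes F f :: "complex \<Rightarrow> complex"
  assumes H: "open H" and der: "\<And>x. x \<in> H \<Longrightarrow> (F has_field_derivative f x) (at x within H)"
    and T: "0 \<le> T" and sub: "\<And>t. t \<in> {0..T} \<Longrightarrow> a + of_real t * d \<in> H"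
  shows "((\<lambda>t. f (a + of_real t * d) * d) has_integral (F (a + of_real T * d) - F a)) {0..T}"
proof -
  have "((\<lambda>t. F (a + of_real t * d)) has_vector_derivative (f (a + of_real t * d) * d)) (at t within {0..T})"
    if t: "t \<in> {0..T}" for t
  proof -
    have d1: "((\<lambda>t. a + of_real t * d) has_vector_derivative d) (at t)"
      by (rule line_vderiv)
    have d2: "(F has_field_derivative f (a + of_real t * d)) (at (a + of_real t * d))"
      using der[OF sub[OF t]] unfolding at_within_open[OF sub[OF t] H] .
    have "((F \<circ> (\<lambda>t. a + of_real t * d)) has_vector_derivative (d * f (a + of_real t * d))) (at t)"
      by (rule field_vector_diff_chain_at[OF d1 d2])
    then have "((\<lambda>t. F (a + of_real t * d)) has_vector_derivative (f (a + of_real t * d) * d)) (at t)"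
      by (simp only: o_def mult.commute)
    then show ?thesis
      by (rule has_vector_derivative_at_within)
  qed
  from fundamental_theorem_of_calculus[OF T this] show ?thesis by (simp only: of_real_0 mult_zero_left add_0_right)
qed

lemma integral_tendsto_atLeast:
  fixes h :: "real \<Rightarrow> complex"
  assumes cont: "continuous_on {0..} h" and G: "G integrable_on {0..}"
    and le: "\<And>r. r \<ge> 0 \<Longrightarrow> norm (h r) \<le> G r"
  shows "h integrable_on {0..}" "(\<lambda>n. integral {0..real n} h) \<longlonglongrightarrow> integral {0..} h"
proof -
  define fn where "fn = (\<lambda>(n::nat) r. if r \<in> {0..real n} then h r else 0)"
  have int_n: "h integrable_on {0..real n}" for n
    by (rule integrable_continuous_interval) (rule continuous_on_subset[OF cont], auto)
  have fint: "(fn n has_integral integral {0..real n} h) {0..}" for n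
    unfolding fn_def
    by (subst has_integral_restrict) (use int_n in auto)
  have A: "fn n integrable_on {0..}" for n using fint by blast
  have B: "norm (fn n r) \<le> G r" if "r \<in> {0..}" for n r
  proof -
    have "0 \<le> G r" using order_trans[OF norm_ge_zero le[of r]] that by simp
    then show ?thesis using le[of r] that by (simp add: fn_def)
  qed
  have C: "(\<lambda>n. fn n r) \<longlonglongrightarrow> h r" if "r \<in> {0..}" for r
  proof -
    obtain N where N: "r \<le> real N" using real_arch_simple by blast
    have "fn n r = h r" if "n \<ge> N" for n
    proof -
      have "real N \<le> real n" using that by simp
      then show ?thesis using N \<open>r \<in> {0..}\<close> by (simp add: fn_def)
    qed
    then have "eventually (\<lambda>n. fn n r = h r) sequentially"
      by (rule eventually_sequentiallyI)
    then show ?thesis by (rule tendsto_eventually)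
  qed
  note dc = dominated_convergence[OF A G B C]
  show "h integrable_on {0..}" by (rule dc(1))
  have eq: "(\<lambda>n. integral {0..} (fn n)) = (\<lambda>n. integral {0..real n} h)"
    using fint integral_unique by blast
  show "(\<lambda>n. integral {0..real n} h) \<longlonglongrightarrow> integral {0..} h" 
    using dc(2) unfolding eq .
qed

lemma ray_tendsto:
  fixes F f :: "complex \<Rightarrow> complex"
  assumes H: "open H" and der: "\<And>x. x \<in> H \<Longrightarrow> (F has_field_derivative f x) (at x within H)"
   and cont: "continuous_on H f"
   and ray: "\<And>r. r \<ge> 0 \<Longrightarrow> a + of_real r * w \<in> H"
   and bnd: "\<And>r. r \<ge> 0 \<Longrightarrow> norm (f (a + of_real r * w)) \<le> M * exp (-\<mu> * r)"
   and mu: "\<mu> > 0"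
  shows "(\<lambda>r. f (a + of_real r * w) * w) integrable_on {0..}"
   "(\<lambda>n. F (a + of_real (real n) * w) - F a) \<longlonglongrightarrow> integral {0..} (\<lambda>r. f (a + of_real r * w) * w)"
proof -
  define h where "h = (\<lambda>r. f (a + of_real r * w) * w)"
  define G where "G = (\<lambda>r::real. norm w * M * exp (-\<mu> * r))"
  have "((\<lambda>x::real. exp (-\<mu>*x)) has_integral exp (-\<mu>*0)/\<mu>) {0..}"
    by (rule has_integral_exp_minus_to_infinity[OF mu])
  then have "((\<lambda>x::real. norm w * M * exp (-\<mu>*x)) has_integral (norm w * M) * (exp (-\<mu>*0)/\<mu>)) {0..}"
    by (rule has_integral_mult_right)
  then have Gi: "G integrable_on {0..}" unfolding G_def by blast
  have lc: "continuous_on {0..} (\<lambda>r::real. a + of_real r * w)"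
    by (intro continuous_intros)
  have hc: "continuous_on {0..} h"
    unfolding h_def
    by (intro continuous_on_mult continuous_on_const continuous_on_compose2[OF cont lc]) (use ray in auto)
  have hb: "norm (h r) \<le> G r" if "r \<ge> 0" for r
  proof -
    have "norm (h r) = norm (f (a + of_real r * w)) * norm w" by (simp add: h_def norm_mult)
    also have "\<dots> \<le> M * exp (-\<mu> * r) * norm w"
      by (rule mult_right_mono[OF bnd[OF that]]) simp
    finally show ?thesis by (simp add: G_def mult_ac)
  qed
  note L = integral_tendsto_atLeast[OF hc Gi hb]
  show "(\<lambda>r. f (a + of_real r * w) * w) integrable_on {0..}" using L(1) by (simp add: h_def)
  have "integral {0..real n} h = F (a + of_real (real n) * w) - F a" for n
    unfolding h_def
    by (rule integral_unique, rule line_ftc[OF H der]) (use ray in auto)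
  then show "(\<lambda>n. F (a + of_real (real n) * w) - F a) \<longlonglongrightarrow> integral {0..} (\<lambda>r. f (a + of_real r * w) * w)"
    using L(2) by (simp add: h_def)
qed

lemma Re_segment_le:
  fixes p x y z :: complex
  assumes "z \<in> closed_segment x y"
  shows "Re (p * z) \<le> max (Re (p * x)) (Re (p * y))"
proof -
  obtain u where u: "0 \<le> u" "u \<le> 1" "z = (1 - u) *\<^sub>R x + u *\<^sub>R y"
    using assms unfolding closed_segment_def by blast
  have "Re (p * z) = (1 - u) * Re (p * x) + u * Re (p * y)"
    unfolding u(3) by (simp add: scaleR_conv_of_real algebra_simps)
  also have "\<dots> \<le> (1 - u) * max (Re (p * x)) (Re (p * y)) + u * max (Re (p * x)) (Re (p * y))"
    by (intro add_mono mult_left_mono) (use u in auto)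
  also have "\<dots> = max (Re (p * x)) (Re (p * y))" by (simp add: algebra_simps)
  finally show ?thesis .
qed

lemma deform:
  fixes g :: "complex \<Rightarrow> complex" and p a b w w' :: complex and B :: real
  assumes H: "open H" "convex H" and hol: "g holomorphic_on H"
    and ray1: "\<And>r. r \<ge> 0 \<Longrightarrow> a + of_real r * w \<in> H"
    and ray2: "\<And>r. r \<ge> 0 \<Longrightarrow> b + of_real r * w' \<in> H"
    and gB: "\<And>y. y \<in> H \<Longrightarrow> norm (g y) \<le> B"
    and pw: "Re (p * w) < 0" and pw': "Re (p * w') < 0"
  shows "ray_int p g a w - ray_int p g b w' =
     integral {0..1} (\<lambda>t. exp (p * (a + of_real t * (b - a))) * g (a + of_real t * (b - a)) * (b - a))"
proof -
  define f where "f = (\<lambda>y. exp (p * y) * g y)"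
  have fhol: "f holomorphic_on H" unfolding f_def by (intro holomorphic_intros hol)
  have fcont: "continuous_on H f" by (rule holomorphic_on_imp_continuous_on[OF fhol])
  obtain F where F: "\<And>x. x \<in> H \<Longrightarrow> (F has_field_derivative f x) (at x within H)"
    using holomorphic_convex_primitive'[OF H(2) H(1) fhol] by blast
  have aH: "a \<in> H" using ray1[of 0] by simp
  have bH: "b \<in> H" using ray2[of 0] by simp
  have fB: "norm (f y) \<le> B * exp (Re (p * y))" if "y \<in> H" for y
    using gB[OF that] by (simp add: f_def norm_mult mult.commute)
  have rayb: "norm (f (c + of_real r * d)) \<le> (B * exp (Re (p * c))) * exp (- (- Re (p * d)) * r)"
    if "\<And>r. r \<ge> 0 \<Longrightarrow> c + of_real r * d \<in> H" "r \<ge> 0" for c d r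
  proof -
    have "norm (f (c + of_real r * d)) \<le> B * exp (Re (p * (c + of_real r * d)))"
      using fB that by blast
    also have "Re (p * (c + of_real r * d)) = Re (p * c) + Re (p * d) * r"
      by (simp add: algebra_simps)
    also have "B * exp (Re (p * c) + Re (p * d) * r) = (B * exp (Re (p * c))) * exp (- (- Re (p * d)) * r)"
      by (simp add: exp_add mult_ac)
    finally show ?thesis .
  qed
  have m1: "- Re (p * w) > 0" using pw by simp
  have m2: "- Re (p * w') > 0" using pw' by simp
  note T1 = ray_tendsto[OF H(1) F fcont ray1 rayb[OF ray1] m1]
  note T2 = ray_tendsto[OF H(1) F fcont ray2 rayb[OF ray2] m2]
  have I1: "ray_int p g a w = integral {0..} (\<lambda>r. f (a + of_real r * w) * w)"
    by (simp add: ray_int_def f_def)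
  have I2: "ray_int p g b w' = integral {0..} (\<lambda>r. f (b + of_real r * w') * w')"
    by (simp add: ray_int_def f_def)
  define K where "K = max (Re (p * a)) (Re (p * b))"
  define \<mu> where "\<mu> = min (- Re (p * w)) (- Re (p * w'))"
  have mu: "\<mu> > 0" using m1 m2 by (simp add: \<mu>_def)
  have B0: "B \<ge> 0" using gB[OF aH] norm_ge_zero order_trans by blast
  have segb: "norm (F (a + of_real (real n) * w) - F (b + of_real (real n) * w'))
      \<le> (B * exp (K - \<mu> * real n)) * norm ((a + of_real (real n) * w) - (b + of_real (real n) * w'))" for n
  proof -
    let ?x = "a + of_real (real n) * w" and ?y = "b + of_real (real n) * w'"
    have xH: "?x \<in> H" using ray1[of "real n"] by simp
    have yH: "?y \<in> H" using ray2[of "real n"] by simp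
    have segH: "closed_segment ?x ?y \<subseteq> H"
      by (rule closed_segment_subset[OF xH yH H(2)])
    show ?thesis
    proof (rule field_differentiable_bound[OF convex_closed_segment])
      fix z assume z: "z \<in> closed_segment ?x ?y"
      have zH: "z \<in> H" using segH z by blast
      have "(F has_field_derivative f z) (at z)"
        using F[OF zH] unfolding at_within_open[OF zH H(1)] .
      then show "(F has_field_derivative f z) (at z within closed_segment ?x ?y)"
        by (rule has_field_derivative_at_within)
      have "Re (p * z) \<le> max (Re (p * ?x)) (Re (p * ?y))" by (rule Re_segment_le[OF z])
      also have "\<dots> \<le> K - \<mu> * real n"
      proof -
        have "Re (p * ?x) = Re (p * a) + Re (p * w) * real n" by (simp add: algebra_simps)
        moreover have "Re (p * ?y) = Re (p * b) + Re (p * w') * real n" by (simp add: algebra_simps)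
        moreover have "Re (p * w) * real n \<le> - \<mu> * real n" 
          by (intro mult_right_mono) (auto simp: \<mu>_def)
        moreover have "Re (p * w') * real n \<le> - \<mu> * real n" 
          by (intro mult_right_mono) (auto simp: \<mu>_def)
        ultimately show ?thesis unfolding K_def by linarith
      qed
      finally have "exp (Re (p * z)) \<le> exp (K - \<mu> * real n)" by simp
      then show "norm (f z) \<le> B * exp (K - \<mu> * real n)"
        using fB[OF zH] B0 by (meson mult_left_mono order_trans)
    qed auto
  qed
  have segb2: "norm (F (a + of_real (real n) * w) - F (b + of_real (real n) * w'))
      \<le> (B * exp (K - \<mu> * real n)) * (norm (a - b) + real n * norm (w - w'))" for n
  proof -
    have "norm ((a + of_real (real n) * w) - (b + of_real (real n) * w')) = norm ((a - b) + of_real (real n) * (w - w'))"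
      by (simp add: algebra_simps)
    also have "\<dots> \<le> norm (a - b) + real n * norm (w - w')"
      by (rule order_trans[OF norm_triangle_ineq]) (simp add: norm_mult)
    finally show ?thesis using segb[of n] B0
      by (meson exp_ge_zero mult_left_mono order_trans zero_le_mult_iff)
  qed
  have lim0: "(\<lambda>n::nat. (B * exp (K - \<mu> * real n)) * (norm (a - b) + real n * norm (w - w'))) \<longlonglongrightarrow> 0"
  proof -
    have "((\<lambda>x::real. (B * exp (K - \<mu> * x)) * (norm (a - b) + x * norm (w - w'))) \<longlongrightarrow> 0) at_top"
    proof -
      have "((\<lambda>x::real. exp (K - \<mu> * x)) \<longlongrightarrow> 0) at_top" using mu by real_asymp
      moreover have "((\<lambda>x::real. exp (K - \<mu> * x) * x) \<longlongrightarrow> 0) at_top" using mu by real_asymp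
      ultimately have "((\<lambda>x::real. B * norm (a - b) * exp (K - \<mu> * x) + B * norm (w - w') * (exp (K - \<mu> * x) * x)) \<longlongrightarrow> B * norm (a - b) * 0 + B * norm (w - w') * 0) at_top"
        by (intro tendsto_intros)
      then show ?thesis by (simp add: algebra_simps)
    qed
    from filterlim_compose[OF this filterlim_real_sequentially] show ?thesis by (simp add: o_def)
  qed
  have segT: "(\<lambda>n. F (a + of_real (real n) * w) - F (b + of_real (real n) * w')) \<longlonglongrightarrow> 0"
    by (rule Lim_null_comparison[OF always_eventually lim0]) (use segb2 in blast)
  have "(\<lambda>n. (F (a + of_real (real n) * w) - F a) - (F (b + of_real (real n) * w') - F b))
     \<longlonglongrightarrow> ray_int p g a w - ray_int p g b w'"
    unfolding I1 I2 by (intro tendsto_diff T1(2) T2(2))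
  moreover have "(\<lambda>n. (F (a + of_real (real n) * w) - F a) - (F (b + of_real (real n) * w') - F b))
     \<longlonglongrightarrow> 0 + (F b - F a)"
  proof -
    have "(\<lambda>n. (F (a + of_real (real n) * w) - F (b + of_real (real n) * w')) + (F b - F a)) \<longlonglongrightarrow> 0 + (F b - F a)"
      by (intro tendsto_add segT tendsto_const)
    then show ?thesis by (simp add: algebra_simps)
  qed
  ultimately have eq: "ray_int p g a w - ray_int p g b w' = F b - F a"
    using LIMSEQ_unique by fastforce
  have segH2: "a + of_real t * (b - a) \<in> H" if "t \<in> {0..1}" for t
  proof -
    have "(1 - t) *\<^sub>R a + t *\<^sub>R b \<in> H" by (rule convexD[OF H(2) aH bH]) (use that in auto)
    moreover have "(1 - t) *\<^sub>R a + t *\<^sub>R b = a + of_real t * (b - a)"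
      by (simp add: scaleR_conv_of_real algebra_simps)
    ultimately show ?thesis by simp
  qed
  have "((\<lambda>t. f (a + of_real t * (b - a)) * (b - a)) has_integral (F (a + of_real 1 * (b - a)) - F a)) {0..1}"
    by (rule line_ftc[OF H(1) F]) (use segH2 in auto)
  then have "integral {0..1} (\<lambda>t. f (a + of_real t * (b - a)) * (b - a)) = F (a + of_real 1 * (b - a)) - F a"
    by (rule integral_unique)
  then have "integral {0..1} (\<lambda>t. f (a + of_real t * (b - a)) * (b - a)) = F b - F a"
    by simp
  then show ?thesis using eq by (simp add: f_def)
qed

lemma has_integral_reflect_real_gen:
  fixes f :: "real \<Rightarrow> complex"
  assumes "(f has_integral i) S"
  shows "((\<lambda>x. f (-x)) has_integral i) (uminus ` S)"
proof -
  define fS where "fS = (\<lambda>x. if x \<in> S then f x else 0)"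
  have eq: "(\<lambda>x. if x \<in> uminus ` S then f (-x) else 0) = (\<lambda>x. fS (-x))"
    by (rule ext) (auto simp: fS_def image_iff intro: bexI[of _ "- _"])
  have A: "\<forall>a b. fS integrable_on cbox a b" and
       B: "\<forall>e>0. \<exists>B>0. \<forall>a b. ball 0 B \<subseteq> cbox a b \<longrightarrow> norm (integral (cbox a b) fS - i) < e"
    using assms unfolding has_integral_alt'[of f] fS_def by auto
  show ?thesis
    unfolding has_integral_alt'[of "\<lambda>x. f (-x)"] eq
  proof (intro conjI allI impI)
    fix a b :: real
    have "fS integrable_on {-b..-a}" using A by (metis box_real(2))
    then show "(\<lambda>x. fS (-x)) integrable_on cbox a b"
      using Henstock_Kurzweil_Integration.integrable_reflect_real[where f=fS and a="-b" and b="-a"] by simp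
  next
    fix e :: real assume e: "e > 0"
    obtain B0 where B0: "B0 > 0" "\<And>a b. ball 0 B0 \<subseteq> cbox a b \<Longrightarrow> norm (integral (cbox a b) fS - i) < e"
      using B e by blast
    show "\<exists>B>0. \<forall>a b. ball 0 B \<subseteq> cbox a b \<longrightarrow> norm (integral (cbox a b) (\<lambda>x. fS (-x)) - i) < e"
    proof (intro exI[of _ B0] conjI allI impI)
      fix a b :: real assume sub: "ball 0 B0 \<subseteq> cbox a b"
      have sub': "ball 0 B0 \<subseteq> cbox (-b) (-a)"
      proof
        fix x :: real assume "x \<in> ball 0 B0"
        then have "-x \<in> ball 0 B0" by (simp add: dist_real_def)
        then have "-x \<in> cbox a b" using sub by blast
        then show "x \<in> cbox (-b) (-a)" by auto
      qed
      have "integral (cbox a b) (\<lambda>x. fS (-x)) = integral (cbox (-b) (-a)) fS"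
        using Henstock_Kurzweil_Integration.integral_reflect_real[where f=fS and a="-b" and b="-a"] by simp
      then show "norm (integral (cbox a b) (\<lambda>x. fS (-x)) - i) < e" using B0(2)[OF sub'] by simp
    qed (use B0 in auto)
  qed
qed

lemma uminus_atLeast_real: "uminus ` {0::real..} = {..0}"
  by (auto simp: image_iff intro: bexI[of _ "- _"])

lemma ILT_split:
  fixes g :: "complex \<Rightarrow> complex" and p :: complex and \<phi>' c :: real
  defines "w1 \<equiv> \<i> * exp (\<i> * of_real \<phi>')" and "u1 \<equiv> - \<i> * exp (\<i> * of_real (- \<phi>'))"
  assumes i1: "(\<lambda>r. exp (p * (of_real c + of_real r * w1)) * g (of_real c + of_real r * w1) * w1) integrable_on {0..}"
    and i2: "(\<lambda>r. exp (p * (of_real c + of_real r * u1)) * g (of_real c + of_real r * u1) * u1) integrable_on {0..}"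
  shows "ILT \<phi>' c g p = (1 / (2 * of_real pi * \<i>)) * (ray_int p g (of_real c) w1 - ray_int p g (of_real c) u1)"
proof -
  define h where "h = (\<lambda>r. exp (p * ilt_path \<phi>' c r) * g (ilt_path \<phi>' c r) * ilt_path_deriv \<phi>' r)"
  define k1 where "k1 = (\<lambda>r. exp (p * (of_real c + of_real r * w1)) * g (of_real c + of_real r * w1) * w1)"
  define k2 where "k2 = (\<lambda>r. exp (p * (of_real c + of_real r * u1)) * g (of_real c + of_real r * u1) * u1)"
  have H1: "(k1 has_integral ray_int p g (of_real c) w1) {0..}"
    unfolding k1_def ray_int_def by (rule integrable_integral[OF i1])
  have H2: "(k2 has_integral ray_int p g (of_real c) u1) {0..}"
    unfolding k2_def ray_int_def by (rule integrable_integral[OF i2])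
  have P1: "(h has_integral ray_int p g (of_real c) w1) {0..}"
  proof (rule has_integral_spike[OF negligible_sing _ H1])
    fix r :: real assume "r \<in> {0..} - {0}"
    then have r: "r > 0" by auto
    then show "h r = k1 r"
      by (simp add: h_def k1_def ilt_path_def ilt_path_deriv_def w1_def mult_ac)
  qed
  have "((\<lambda>r. - k2 r) has_integral - ray_int p g (of_real c) u1) {0..}"
    by (rule has_integral_neg[OF H2])
  from has_integral_reflect_real_gen[OF this]
  have H2': "((\<lambda>r. - k2 (-r)) has_integral - ray_int p g (of_real c) u1) {..0}"
    by (simp add: uminus_atLeast_real)
  have P2: "(h has_integral - ray_int p g (of_real c) u1) {..0}"
  proof (rule has_integral_spike[OF negligible_sing _ H2'])
    fix r :: real assume "r \<in> {..0} - {0}"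
    then have r: "r < 0" by auto
    then show "h r = - k2 (-r)"
      by (simp add: h_def k2_def ilt_path_def ilt_path_deriv_def u1_def mult_ac)
  qed
  have "(h has_integral (ray_int p g (of_real c) w1 + - ray_int p g (of_real c) u1)) ({0..} \<union> {..0})"
    by (rule has_integral_Un[OF P1 P2]) (auto intro: negligible_subset[OF negligible_sing[of 0]])
  moreover have "{0..} \<union> {..0} = (UNIV :: real set)" by auto
  ultimately have "integral UNIV h = ray_int p g (of_real c) w1 - ray_int p g (of_real c) u1"
    by (simp add: integral_unique)
  then show ?thesis by (simp add: ILT_def h_def)
qed

lemma ln_lower_aux:
  fixes x :: real assumes x: "x \<ge> 0"
  shows "2 * x / (2 + x) \<le> ln (1 + x)"
proof -
  define f where "f = (\<lambda>x::real. ln (1 + x) - 2 * x / (2 + x))"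
  have "f 0 \<le> f x"
  proof (rule DERIV_nonneg_imp_nondecreasing[OF x])
    fix y :: real assume y: "0 \<le> y" "y \<le> x"
    have d: "(f has_real_derivative (1 / (1 + y) - 4 / (2 + y)^2)) (at y)"
      unfolding f_def using y
      by (auto intro!: derivative_eq_intros simp: power2_eq_square field_simps)
    have p1: "(2 + y)^2 > 0" "1 + y > 0" using y by auto
    have "4 * (1 + y) \<le> 1 * (2 + y)^2" using y by (simp add: power2_eq_square algebra_simps)
    then have "4 * (1 + y) / ((2 + y)^2 * (1 + y)) \<le> (2 + y)^2 * 1 / ((2 + y)^2 * (1 + y))"
      using p1 by (intro divide_right_mono) auto
    moreover have "4 * (1 + y) / ((2 + y)^2 * (1 + y)) = 4 / (2 + y)^2" 
      by (rule nonzero_mult_divide_mult_cancel_right) (use p1 in auto)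
    moreover have "(2 + y)^2 * 1 / ((2 + y)^2 * (1 + y)) = 1 / (1 + y)"
      by (rule nonzero_mult_divide_mult_cancel_left) (use p1 in auto)
    ultimately have "4 / (2 + y)^2 \<le> 1 / (1 + y)" by simp
    then show "\<exists>d. (f has_real_derivative d) (at y) \<and> 0 \<le> d" using d by auto
  qed
  then show ?thesis by (simp add: f_def)
qed

lemma ln_fact_bound:
  assumes "n \<ge> 1"
  shows "ln (fact n :: real) \<le> 1 + (real n + 1/2) * ln (real n) - real n"
  using assms
proof (induction n rule: dec_induct)
  case base
  then show ?case by simp
next
  case (step n)
  have n: "real n \<ge> 1" using step by simp
  have key: "1 \<le> (real n + 1/2) * (ln (real n + 1) - ln (real n))"
  proof -
    have "2 * (1 / real n) / (2 + 1 / real n) \<le> ln (1 + 1 / real n)"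
      by (rule ln_lower_aux) (use n in simp)
    also have "ln (1 + 1 / real n) = ln (real n + 1) - ln (real n)"
    proof -
      have "1 + 1 / real n = (real n + 1) / real n" using n by (simp add: field_simps)
      then show ?thesis using n by (simp add: ln_div)
    qed
    finally have h: "2 * (1 / real n) / (2 + 1 / real n) \<le> ln (real n + 1) - ln (real n)" .
    have "2 * (1 / real n) / (2 + 1 / real n) = 1 / (real n + 1/2)"
      using n by (simp add: field_simps)
    with h have "1 / (real n + 1/2) \<le> ln (real n + 1) - ln (real n)" by simp
    then show ?thesis using n by (simp add: field_simps)
  qed
  have "ln (fact (Suc n) :: real) = ln (real n + 1) + ln (fact n)"
    using n by (simp add: ln_mult add.commute)
  also have "\<dots> \<le> ln (real n + 1) + (1 + (real n + 1/2) * ln (real n) - real n)"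
    using step.IH by simp
  also have "\<dots> \<le> 1 + (real (Suc n) + 1/2) * ln (real (Suc n)) - real (Suc n)"
    using key by (simp add: algebra_simps)
  finally show ?case .
qed

lemma Gamma_real_nat: "n \<ge> 1 \<Longrightarrow> Gamma (real n) = fact (n - 1)"
  using Gamma_fact[of "n - 1", where 'a = real] by (simp add: of_nat_diff)

lemma ln_Gamma_upper:
  fixes \<nu> :: real assumes nu: "\<nu> \<ge> 1"
  shows "ln (Gamma \<nu>) \<le> 2 + (\<nu> - 1/2) * ln \<nu> - \<nu>"
proof -
  define n where "n = nat \<lfloor>\<nu>\<rfloor>"
  define t where "t = \<nu> - real n"
  have n1: "n \<ge> 1" using nu by (simp add: n_def le_nat_iff)
  have nle: "real n \<le> \<nu>" using nu by (simp add: n_def)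
  have t0: "0 \<le> t" using nle by (simp add: t_def)
  have t1: "t \<le> 1" using nu by (simp add: t_def n_def) linarith
  have rn: "real n \<ge> 1" using n1 by simp
  have conv: "(ln \<circ> Gamma) ((1 - t) *\<^sub>R real n + t *\<^sub>R (real n + 1)) \<le> (1 - t) * (ln \<circ> Gamma) (real n) + t * (ln \<circ> Gamma) (real n + 1)"
    by (rule convex_onD[OF log_convex_Gamma_real t0 t1]) (use rn in auto)
  have eqv: "(1 - t) *\<^sub>R real n + t *\<^sub>R (real n + 1) = \<nu>" by (simp add: t_def algebra_simps)
  have G1: "Gamma (real n) = fact (n - 1)" by (rule Gamma_real_nat[OF n1])
  have G2: "Gamma (real n + 1) = fact n" using Gamma_fact[of n, where 'a = real] by (simp add: add.commute)
  have fn: "(fact n :: real) = real n * fact (n - 1)"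
    using n1 fact_reduce[of n, where 'a=real] by simp
  have lf: "ln (fact (n - 1) :: real) = ln (fact n) - ln (real n)"
    using fn rn by (simp add: ln_mult)
  have "ln (Gamma \<nu>) \<le> (1 - t) * ln (fact (n - 1)) + t * ln (fact n)"
    using conv unfolding eqv by (simp add: G1 G2)
  also have "\<dots> = ln (fact n) - (1 - t) * ln (real n)" unfolding lf by (simp add: algebra_simps)
  also have "\<dots> \<le> 1 + (real n + 1/2) * ln (real n) - real n - (1 - t) * ln (real n)"
    using ln_fact_bound[OF n1] by simp
  also have "\<dots> = 1 + (\<nu> - 1/2) * ln (real n) - real n" by (simp add: t_def algebra_simps)
  also have "\<dots> \<le> 1 + (\<nu> - 1/2) * ln \<nu> - real n"
  proof -
    have "ln (real n) \<le> ln \<nu>" using rn nle by simp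
    then show ?thesis using nu by (simp add: mult_left_mono)
  qed
  also have "\<dots> \<le> 2 + (\<nu> - 1/2) * ln \<nu> - \<nu>" using t1 by (simp add: t_def)
  finally show ?thesis .
qed

lemma Gamma_small:
  fixes \<nu> :: real assumes "0 < \<nu>" "\<nu> \<le> 1"
  shows "Gamma \<nu> \<le> 1 / \<nu>"
proof -
  have conv: "(ln \<circ> Gamma) ((1 - \<nu>) *\<^sub>R 1 + \<nu> *\<^sub>R 2) \<le> (1 - \<nu>) * (ln \<circ> Gamma) 1 + \<nu> * (ln \<circ> Gamma) 2"
    by (rule convex_onD[OF log_convex_Gamma_real]) (use assms in auto)
  have "(1 - \<nu>) *\<^sub>R 1 + \<nu> *\<^sub>R 2 = \<nu> + 1" by (simp add: algebra_simps)
  moreover have "Gamma (2::real) = 1" using Gamma_fact[of 1, where 'a=real] by simp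
  ultimately have "ln (Gamma (\<nu> + 1)) \<le> 0" using conv by simp
  then have "Gamma (\<nu> + 1) \<le> 1" using Gamma_real_pos[of "\<nu> + 1"] assms by simp
  moreover have "Gamma (\<nu> + 1) = \<nu> * Gamma \<nu>"
    by (rule Gamma_plus1) (use assms in \<open>auto simp: nonpos_Ints_def\<close>)
  ultimately have "\<nu> * Gamma \<nu> \<le> 1" by simp
  then show ?thesis using assms by (simp add: field_simps)
qed

definition Qf :: "real \<Rightarrow> real \<Rightarrow> real \<Rightarrow> real" where
  "Qf \<kappa> L \<nu> = (1/pi) * exp \<nu> * exp (- \<nu> * ln \<nu>) * (\<nu> + L) * (exp 1 / sqrt (\<nu> * \<kappa>) + 1 / (\<nu> * \<kappa>))"

definition M1 :: "real \<Rightarrow> real \<Rightarrow> real" where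
  "M1 \<kappa> L = (exp 2 / pi) * (1 + L) * (exp 1 / sqrt \<kappa> + 1 / \<kappa>)"

lemma M1_pos: assumes "\<kappa> > 0" "L \<ge> 0" shows "M1 \<kappa> L > 0"
proof -
  have a: "exp 2 / pi > 0" by simp
  have b: "1 + L > 0" using assms by simp
  have c: "exp 1 / sqrt \<kappa> + 1 / \<kappa> > 0" using assms by (intro add_pos_pos) auto
  show ?thesis unfolding M1_def using a b c by (intro mult_pos_pos)
qed

lemma Gamma_Qf_large:
  fixes \<nu> \<kappa> L :: real
  assumes k: "\<kappa> > 0" and L: "L \<ge> 0" and nu: "\<nu> \<ge> 1"
  shows "Gamma \<nu> * Qf \<kappa> L \<nu> \<le> M1 \<kappa> L"
proof -
  have nu0: "\<nu> > 0" using nu by simp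
  have sq1: "sqrt \<nu> \<ge> 1" using nu by simp
  have G: "Gamma \<nu> \<le> exp (2 + (\<nu> - 1/2) * ln \<nu> - \<nu>)"
  proof -
    have "Gamma \<nu> = exp (ln (Gamma \<nu>))" using Gamma_real_pos[OF nu0] by simp
    also have "\<dots> \<le> exp (2 + (\<nu> - 1/2) * ln \<nu> - \<nu>)" using ln_Gamma_upper[OF nu] by simp
    finally show ?thesis .
  qed
  define X where "X = exp 1 / sqrt (\<nu> * \<kappa>) + 1 / (\<nu> * \<kappa>)"
  have X0: "X \<ge> 0" unfolding X_def using k nu0 by simp
  have Q0: "Qf \<kappa> L \<nu> \<ge> 0" unfolding Qf_def X_def[symmetric] using L nu0 X0 by simp
  have "Gamma \<nu> * Qf \<kappa> L \<nu> \<le> exp (2 + (\<nu> - 1/2) * ln \<nu> - \<nu>) * Qf \<kappa> L \<nu>"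
    by (rule mult_right_mono[OF G Q0])
  also have "\<dots> = (1/pi) * (exp (2 + (\<nu> - 1/2) * ln \<nu> - \<nu>) * exp \<nu> * exp (- \<nu> * ln \<nu>)) * (\<nu> + L) * X"
    unfolding Qf_def X_def by (simp add: mult_ac)
  also have "exp (2 + (\<nu> - 1/2) * ln \<nu> - \<nu>) * exp \<nu> * exp (- \<nu> * ln \<nu>) = exp 2 * exp (- (ln \<nu> / 2))"
    by (simp add: exp_add[symmetric] exp_diff[symmetric] algebra_simps)
  also have "exp (- (ln \<nu> / 2)) = 1 / sqrt \<nu>"
  proof -
    have "sqrt \<nu> = exp (ln \<nu> / 2)" using nu0 by (simp add: powr_half_sqrt[symmetric] powr_def)
    then show ?thesis by (simp add: exp_minus inverse_eq_divide)
  qed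
  finally have A0: "Gamma \<nu> * Qf \<kappa> L \<nu> \<le> (1/pi) * (exp 2 * (1 / sqrt \<nu>)) * (\<nu> + L) * X" .
  have "(1/pi) * (exp 2 * (1 / sqrt \<nu>)) * (\<nu> + L) * X = (exp 2 / pi) * ((\<nu> + L) / \<nu>) * (X * (\<nu> / sqrt \<nu>))"
    using nu0 by (simp add: field_simps)
  with A0 have A: "Gamma \<nu> * Qf \<kappa> L \<nu> \<le> (exp 2 / pi) * ((\<nu> + L) / \<nu>) * (X * (\<nu> / sqrt \<nu>))" by simp
  have B1: "(\<nu> + L) / \<nu> \<le> 1 + L"
  proof -
    have "(\<nu> + L) / \<nu> = 1 + L / \<nu>" using nu0 by (simp add: field_simps)
    also have "L / \<nu> \<le> L" using L nu by (simp add: divide_le_eq mult_le_cancel_left1) 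
    finally show ?thesis by simp
  qed
  have B2: "X * (\<nu> / sqrt \<nu>) \<le> exp 1 / sqrt \<kappa> + 1 / \<kappa>"
  proof -
    have e1: "X * (\<nu> / sqrt \<nu>) = exp 1 / (sqrt \<nu> * sqrt \<kappa>) * (\<nu> / sqrt \<nu>) + 1 / (\<nu> * \<kappa>) * (\<nu> / sqrt \<nu>)"
      unfolding X_def real_sqrt_mult by (rule distrib_right)
    have "exp 1 / (sqrt \<nu> * sqrt \<kappa>) * (\<nu> / sqrt \<nu>) = exp 1 / sqrt \<kappa>"
    proof -
      have "sqrt \<nu> * sqrt \<nu> = \<nu>" using nu0 by simp
      then show ?thesis using nu0 k by (simp add: field_simps)
    qed
    moreover have "1 / (\<nu> * \<kappa>) * (\<nu> / sqrt \<nu>) = 1 / (\<kappa> * sqrt \<nu>)"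
      using nu0 k by (simp add: field_simps)
    moreover have "1 / (\<kappa> * sqrt \<nu>) \<le> 1 / \<kappa>"
      using sq1 k by (simp add: divide_le_eq_1 frac_le)
    ultimately show ?thesis using e1 by simp
  qed
  have C0: "(\<nu> + L) / \<nu> \<ge> 0" using L nu0 by simp
  have C1: "X * (\<nu> / sqrt \<nu>) \<ge> 0" using X0 nu0 by simp
  have "(exp 2 / pi) * ((\<nu> + L) / \<nu>) * (X * (\<nu> / sqrt \<nu>)) \<le> (exp 2 / pi) * (1 + L) * (exp 1 / sqrt \<kappa> + 1 / \<kappa>)"
    using B1 B2 C0 C1 by (intro mult_mono mult_left_mono) auto
  with A show ?thesis unfolding M1_def by linarith
qed

lemma Gamma_Qf_small:
  fixes \<nu> \<kappa> L :: real
  assumes k: "\<kappa> > 0" and L: "L \<ge> 0" and nu0: "\<nu> > 0" and nu1: "\<nu> \<le> 1"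
  shows "Gamma \<nu> * Qf \<kappa> L \<nu> \<le> M1 \<kappa> L / \<nu>^3"
proof -
  define X where "X = exp 1 / sqrt (\<nu> * \<kappa>) + 1 / (\<nu> * \<kappa>)"
  have X0: "X \<ge> 0" unfolding X_def using k nu0 by simp
  have g: "Gamma \<nu> \<le> 1 / \<nu>" by (rule Gamma_small[OF nu0 nu1])
  have e1: "exp \<nu> \<le> exp 1" using nu1 by simp
  have e2: "exp (- \<nu> * ln \<nu>) \<le> 1 / \<nu>"
  proof -
    have "ln \<nu> \<le> 0" using nu0 nu1 by simp
    then have "- \<nu> * ln \<nu> \<le> - ln \<nu>" using nu1 nu0
      by (simp add: mult_le_cancel_right1 mult_nonpos_nonneg)
    then have "exp (- \<nu> * ln \<nu>) \<le> exp (- ln \<nu>)" by simp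
    also have "\<dots> = 1 / \<nu>" using nu0 by (simp add: exp_minus inverse_eq_divide)
    finally show ?thesis .
  qed
  have e3: "\<nu> + L \<le> 1 + L" using nu1 by simp
  have e4: "X \<le> (exp 1 / sqrt \<kappa> + 1 / \<kappa>) / \<nu>"
  proof -
    have s: "\<nu> \<le> sqrt \<nu>" using nu0 nu1 by (simp add: real_le_rsqrt power2_eq_square mult_le_cancel_left1)
    have "exp 1 / sqrt (\<nu> * \<kappa>) = exp 1 / (sqrt \<nu> * sqrt \<kappa>)" by (simp add: real_sqrt_mult)
    also have "\<dots> \<le> exp 1 / (\<nu> * sqrt \<kappa>)"
      using s nu0 k by (intro divide_left_mono mult_right_mono mult_pos_pos) auto
    also have "\<dots> = (exp 1 / sqrt \<kappa>) / \<nu>" by simp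
    finally have "exp 1 / sqrt (\<nu> * \<kappa>) \<le> (exp 1 / sqrt \<kappa>) / \<nu>" .
    moreover have "1 / (\<nu> * \<kappa>) = (1 / \<kappa>) / \<nu>" by simp
    ultimately show ?thesis unfolding X_def add_divide_distrib by linarith
  qed
  have "Gamma \<nu> * Qf \<kappa> L \<nu> = (1/pi) * (Gamma \<nu> * exp \<nu> * exp (- \<nu> * ln \<nu>) * (\<nu> + L) * X)"
    unfolding Qf_def X_def by (simp add: mult_ac)
  also have "\<dots> \<le> (1/pi) * ((1 / \<nu>) * exp 1 * (1 / \<nu>) * (1 + L) * ((exp 1 / sqrt \<kappa> + 1 / \<kappa>) / \<nu>))"
    using g e1 e2 e3 e4 nu0 L X0 Gamma_real_pos[OF nu0]
    by (intro mult_left_mono mult_mono) auto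
  also have "\<dots> = (exp 1 / pi) * (1 + L) * (exp 1 / sqrt \<kappa> + 1 / \<kappa>) / \<nu>^3"
    by (simp add: field_simps power3_eq_cube)
  also have "\<dots> \<le> M1 \<kappa> L / \<nu>^3"
  proof -
    have "(exp 1 / pi) * (1 + L) * (exp 1 / sqrt \<kappa> + 1 / \<kappa>) \<le> M1 \<kappa> L"
      unfolding M1_def using L k by (intro mult_right_mono divide_right_mono) auto
    then show ?thesis by (rule divide_right_mono) (use nu0 in auto)
  qed
  finally show ?thesis .
qed

lemma Gamma_Qf:
  fixes \<nu> \<kappa> L :: real
  assumes k: "\<kappa> > 0" and L: "L \<ge> 0" and nu0: "\<nu> > 0"
  shows "Gamma \<nu> * Qf \<kappa> L \<nu> \<le> M1 \<kappa> L * (1 + 1 / \<nu>^3)"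
proof (cases "\<nu> \<le> 1")
  case True
  then have "Gamma \<nu> * Qf \<kappa> L \<nu> \<le> M1 \<kappa> L / \<nu>^3" by (rule Gamma_Qf_small[OF k L nu0])
  moreover have "M1 \<kappa> L / \<nu>^3 \<le> M1 \<kappa> L * (1 + 1 / \<nu>^3)"
    using M1_pos[OF k L] nu0 by (simp add: field_simps)
  ultimately show ?thesis by linarith
next
  case False
  then have "Gamma \<nu> * Qf \<kappa> L \<nu> \<le> M1 \<kappa> L" by (intro Gamma_Qf_large[OF k L]) auto
  moreover have "M1 \<kappa> L \<le> M1 \<kappa> L * (1 + 1 / \<nu>^3)"
    using M1_pos[OF k L] nu0 by (simp add: field_simps)
  ultimately show ?thesis by linarith
qed

lemma exp_sq_le:
  fixes a u :: real assumes a: "a \<ge> 0" and u: "u \<ge> 0"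
  shows "exp (- (a^2 * u^2)) \<le> exp 1 * exp (- (a * u))"
proof (cases "a * u \<le> 1")
  case True
  have "exp (- (a^2 * u^2)) \<le> 1" using a u by simp
  also have "1 \<le> exp 1 * exp (- (a * u))"
  proof -
    have "1 - a * u \<ge> 0" using True by simp
    then have "exp 0 \<le> exp (1 - a * u)" by (subst exp_le_cancel_iff) 
    then show ?thesis by (simp add: exp_diff exp_minus field_simps)
  qed
  finally show ?thesis .
next
  case False
  then have "a * u \<le> (a * u) * (a * u)" using a u by (simp add: mult_le_cancel_left1)
  then have "- (a^2 * u^2) \<le> - (a * u)" by (simp add: power2_eq_square mult_ac)
  then have "exp (- (a^2 * u^2)) \<le> exp (- (a * u))" by simp
  also have "\<dots> \<le> exp 1 * exp (- (a * u))" by simp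
  finally show ?thesis .
qed

lemma ray_pointwise:
  fixes P R \<nu> \<sigma> \<kappa> r :: real
  assumes P: "P > 0" and R: "R > 0" and nu: "\<nu> > 0" and PR: "P * R \<ge> \<nu>"
    and s0: "0 < \<sigma>" and s1: "\<sigma> < 1/2" and k0: "\<kappa> > 0"
    and k1: "\<kappa> \<le> (1 - 4 * \<sigma>^2) / 4" and k2: "\<kappa> \<le> \<sigma> / 2" and r: "r \<ge> 0"
  shows "exp (- P * \<sigma> * r) * sqrt (R^2 - 2 * R * r * \<sigma> + r^2) powr (-\<nu>)
    \<le> R powr (-\<nu>) * (exp 1 * exp (- (sqrt (\<nu> * \<kappa>) / R) * r) + exp (- (\<nu> * \<kappa> / R) * r))"
proof -
  define u where "u = r / R"
  have u0: "u \<ge> 0" using r R by (simp add: u_def)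
  have ru: "r = R * u" using R by (simp add: u_def)
  define Q where "Q = 1 - 2 * \<sigma> * u + u^2"
  have Qpos: "Q > 0"
  proof -
    have "Q = (u - \<sigma>)^2 + (1 - \<sigma>^2)" by (simp add: Q_def power2_eq_square algebra_simps)
    moreover have "\<sigma>^2 < 1"
    proof -
      have "\<sigma> * \<sigma> < 1 * 1" using s0 s1 by (intro mult_strict_mono) auto
      then show ?thesis by (simp add: power2_eq_square)
    qed
    ultimately show ?thesis by (smt (verit) zero_le_power2)
  qed
  have qeq: "R^2 - 2 * R * r * \<sigma> + r^2 = R^2 * Q" unfolding Q_def ru by (simp add: power2_eq_square algebra_simps)
  have sq: "sqrt (R^2 - 2 * R * r * \<sigma> + r^2) = R * sqrt Q" unfolding qeq using R by (simp add: real_sqrt_mult)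
  have pw: "sqrt (R^2 - 2 * R * r * \<sigma> + r^2) powr (-\<nu>) = R powr (-\<nu>) * exp (- (\<nu> / 2) * ln Q)"
  proof -
    have "(R * sqrt Q) powr (-\<nu>) = R powr (-\<nu>) * sqrt Q powr (-\<nu>)"
      using R Qpos by (simp add: powr_mult)
    moreover have "sqrt Q powr (-\<nu>) = exp (- (\<nu> / 2) * ln Q)"
      using Qpos by (simp add: powr_def ln_sqrt)
    ultimately show ?thesis unfolding sq by simp
  qed
  have e1: "exp (- P * \<sigma> * r) \<le> exp (- \<nu> * \<sigma> * u)"
  proof -
    have "\<nu> * \<sigma> * u \<le> (P * R) * \<sigma> * u" using PR s0 u0 by (intro mult_right_mono) auto
    then show ?thesis by (simp add: ru mult_ac)
  qed
  define E where "E = \<sigma> * u + (1 - 1 / Q) / 2"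
  have lnQ: "ln Q \<ge> 1 - 1 / Q"
  proof -
    have "ln (1 / Q) \<le> 1 / Q - 1" using Qpos by (intro ln_le_minus_one) simp
    then show ?thesis using Qpos by (simp add: ln_div)
  qed
  have e2: "exp (- \<nu> * \<sigma> * u) * exp (- (\<nu> / 2) * ln Q) \<le> exp (- \<nu> * E)"
  proof -
    have h: "\<nu> * (1 - 1 / Q) \<le> \<nu> * ln Q" by (rule mult_left_mono[OF lnQ]) (use nu in simp)
    have h2: "- \<nu> * E = - \<nu> * \<sigma> * u - (\<nu> * (1 - 1 / Q)) / 2" by (simp add: E_def field_simps)
    have h3: "- (\<nu> / 2) * ln Q = - (\<nu> * ln Q) / 2" by simp
    have gen: "A \<le> B \<Longrightarrow> C + - B / 2 \<le> C - A / 2" for A B C :: real by simp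
    have "- \<nu> * \<sigma> * u + - (\<nu> * ln Q) / 2 \<le> - \<nu> * \<sigma> * u - (\<nu> * (1 - 1 / Q)) / 2"
      by (rule gen[OF h])
    then have "- \<nu> * \<sigma> * u + (- (\<nu> / 2) * ln Q) \<le> - \<nu> * E"
      unfolding h2 h3 .
    then show ?thesis by (simp add: exp_add[symmetric])
  qed
  have Eeq: "E * (2 * Q) = u^2 * (1 - 4 * \<sigma>^2 + 2 * \<sigma> * u)"
    unfolding E_def using Qpos by (simp add: Q_def field_simps power2_eq_square)
  have s2: "1 - 4 * \<sigma>^2 \<ge> 0" using k0 k1 by simp
  have main: "exp (- \<nu> * E) \<le> exp 1 * exp (- (sqrt (\<nu> * \<kappa>) / R) * r) + exp (- (\<nu> * \<kappa> / R) * r)"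
  proof (cases "u \<le> 1")
    case True
    have Q2: "Q \<le> 2" unfolding Q_def using True u0 s0
      by (smt (verit) mult_nonneg_nonneg mult_left_le_one_le power2_eq_square)
    have "\<kappa> * u^2 * (2 * Q) \<le> u^2 * (1 - 4 * \<sigma>^2 + 2 * \<sigma> * u)"
    proof -
      have "\<kappa> * (2 * Q) \<le> \<kappa> * 4" using Q2 k0 by simp
      also have "\<dots> \<le> 1 - 4 * \<sigma>^2" using k1 by simp
      also have "\<dots> \<le> 1 - 4 * \<sigma>^2 + 2 * \<sigma> * u" using s0 u0 by simp
      finally have "\<kappa> * (2 * Q) \<le> 1 - 4 * \<sigma>^2 + 2 * \<sigma> * u" .
      then have "u^2 * (\<kappa> * (2 * Q)) \<le> u^2 * (1 - 4 * \<sigma>^2 + 2 * \<sigma> * u)"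
        by (rule mult_left_mono) simp
      then show ?thesis by (simp add: mult_ac)
    qed
    then have "\<kappa> * u^2 * (2 * Q) \<le> E * (2 * Q)" using Eeq by simp
    then have Ek: "\<kappa> * u^2 \<le> E" using Qpos by simp
    have "exp (- \<nu> * E) \<le> exp (- ((sqrt (\<nu> * \<kappa>))^2 * u^2))"
      using Ek nu k0 by (simp add: mult_left_mono mult.assoc)
    also have "\<dots> \<le> exp 1 * exp (- (sqrt (\<nu> * \<kappa>) * u))"
      by (rule exp_sq_le) (use u0 nu k0 in auto)
    also have "sqrt (\<nu> * \<kappa>) * u = (sqrt (\<nu> * \<kappa>) / R) * r" using R by (simp add: u_def)
    finally have "exp (- \<nu> * E) \<le> exp 1 * exp (- (sqrt (\<nu> * \<kappa>) / R) * r)" by simp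
    then show ?thesis using exp_gt_zero[of "- (\<nu> * \<kappa> / R) * r"] by linarith
  next
    case False
    then have u1: "u \<ge> 1" by simp
    have Q2: "Q \<le> 2 * u^2" unfolding Q_def using u1 s0
      by (smt (verit) mult_nonneg_nonneg one_le_power power2_eq_square)
    have "\<kappa> * u * (2 * Q) \<le> u^2 * (1 - 4 * \<sigma>^2 + 2 * \<sigma> * u)"
    proof -
      have "\<kappa> * u * (2 * Q) \<le> \<kappa> * u * (4 * u^2)" using Q2 k0 u1 by (intro mult_left_mono) auto
      also have "\<dots> \<le> (\<sigma> / 2) * u * (4 * u^2)" using k2 u1 by (intro mult_right_mono) auto
      also have "\<dots> = u^2 * (2 * \<sigma> * u)" by (simp add: power2_eq_square)
      also have "\<dots> \<le> u^2 * (1 - 4 * \<sigma>^2 + 2 * \<sigma> * u)" using s2 by (intro mult_left_mono) auto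
      finally show ?thesis .
    qed
    then have "\<kappa> * u * (2 * Q) \<le> E * (2 * Q)" using Eeq by simp
    then have Ek: "\<kappa> * u \<le> E" using Qpos by simp
    have "exp (- \<nu> * E) \<le> exp (- (\<nu> * \<kappa> * u))"
      using Ek nu by (simp add: mult_left_mono mult.assoc)
    also have "\<nu> * \<kappa> * u = (\<nu> * \<kappa> / R) * r" using R by (simp add: u_def)
    finally have "exp (- \<nu> * E) \<le> exp (- (\<nu> * \<kappa> / R) * r)" by simp
    then show ?thesis using exp_gt_zero[of "- (sqrt (\<nu> * \<kappa>) / R) * r"] exp_gt_zero[of 1]
      by (smt (verit) mult_pos_pos)
  qed
  have Rp: "R powr (-\<nu>) \<ge> 0" by simp
  have "exp (- P * \<sigma> * r) * sqrt (R^2 - 2 * R * r * \<sigma> + r^2) powr (-\<nu>)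
      = R powr (-\<nu>) * (exp (- P * \<sigma> * r) * exp (- (\<nu> / 2) * ln Q))" unfolding pw by (simp add: mult_ac)
  also have "\<dots> \<le> R powr (-\<nu>) * (exp (- \<nu> * \<sigma> * u) * exp (- (\<nu> / 2) * ln Q))"
    using e1 by (intro mult_left_mono mult_right_mono) auto
  also have "\<dots> \<le> R powr (-\<nu>) * exp (- \<nu> * E)" using e2 by (intro mult_left_mono) auto
  also have "\<dots> \<le> R powr (-\<nu>) * (exp 1 * exp (- (sqrt (\<nu> * \<kappa>) / R) * r) + exp (- (\<nu> * \<kappa> / R) * r))"
    using main by (intro mult_left_mono) auto
  finally show ?thesis .
qed

lemma re_formula:
  "Re ((of_real a * cis \<gamma> + of_real r * (\<i> * cis \<alpha>)) * cis \<beta>) = a * cos (\<gamma> + \<beta>) - r * sin (\<alpha> + \<beta>)"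
  by (simp add: cos_add sin_add algebra_simps)

lemma re_formula2:
  "Re (of_real P * cis \<beta> * (of_real a * cis \<gamma> + of_real r * (\<i> * cis \<alpha>))) = P * (a * cos (\<gamma> + \<beta>) - r * sin (\<alpha> + \<beta>))"
  by (simp add: cos_add sin_add algebra_simps)

lemma norm_formula:
  "cmod (of_real a * cis \<gamma> + of_real r * (\<i> * cis \<alpha>)) = sqrt (a^2 - 2 * a * r * sin (\<alpha> - \<gamma>) + r^2)"
proof -
  have "(cmod (of_real a * cis \<gamma> + of_real r * (\<i> * cis \<alpha>)))^2 = 
     (a * cos \<gamma> - r * sin \<alpha>)^2 + (a * sin \<gamma> + r * cos \<alpha>)^2"
    by (simp add: cmod_power2)
  also have "\<dots> = a^2 * (sin \<gamma>^2 + cos \<gamma>^2) + r^2 * (sin \<alpha>^2 + cos \<alpha>^2) - 2 * a * r * (sin \<alpha> * cos \<gamma> - cos \<alpha> * sin \<gamma>)"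
    by algebra
  also have "\<dots> = a^2 - 2 * a * r * sin (\<alpha> - \<gamma>) + r^2" by (simp add: sin_diff)
  finally show ?thesis by (metis norm_ge_zero real_sqrt_unique)
qed

lemma re_mult_formula:
  "Re (of_real P * cis \<theta> * (\<i> * cis \<alpha>)) = - P * sin (\<theta> + \<alpha>)"
  by (simp add: cos_add sin_add algebra_simps)

lemma half_open: "open {y::complex. \<rho> < Re (y * k)}"
  by (intro open_Collect_less continuous_intros)

lemma half_convex: "convex {y::complex. \<rho> < Re (y * k)}"
  unfolding convex_def
proof (intro ballI allI impI, safe)
  fix x y :: complex and u v :: real
  assume x: "\<rho> < Re (x * k)" and y: "\<rho> < Re (y * k)" and u: "0 \<le> u" and v: "0 \<le> v" and uv: "u + v = 1"
  have E: "Re ((u *\<^sub>R x + v *\<^sub>R y) * k) = u * Re (x * k) + v * Re (y * k)"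
    by (simp add: scaleR_conv_of_real algebra_simps)
  have r: "u * \<rho> + v * \<rho> = \<rho>" using uv by (metis distrib_right mult_1)
  have S: "u * Re (x * k) + v * Re (y * k) > u * \<rho> + v * \<rho>"
  proof (cases "u = 0")
    case True then show ?thesis using uv y by simp
  next
    case False then have "u > 0" using u by simp
    then have "u * Re (x * k) > u * \<rho>" using x by simp
    moreover have "v * Re (y * k) \<ge> v * \<rho>" using y v by (simp add: mult_left_mono)
    ultimately show ?thesis by linarith
  qed
  show "\<rho> < Re ((u *\<^sub>R x + v *\<^sub>R y) * k)" using E r S by linarith
qed

lemma cos_nonpos_aux: "pi/2 \<le> x \<Longrightarrow> x \<le> 3*pi/2 \<Longrightarrow> cos x \<le> 0"
  using cos_ge_zero[of "x - pi"] by simp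

lemma cos_nonpos_aux2: "-(3*pi/2) \<le> x \<Longrightarrow> x \<le> -(pi/2) \<Longrightarrow> cos x \<le> 0"
  using cos_ge_zero[of "x + pi"] by simp

lemma half_sub_sector:
  assumes \<rho>: "\<rho> > 0" and s: "s = 1 \<or> s = -1"
  shows "{y. \<rho> < Re (y * cis (s * pi/6))} \<subseteq> sector_dom \<rho>"
proof
  fix y assume "y \<in> {y. \<rho> < Re (y * cis (s * pi/6))}"
  then have y: "\<rho> < Re (y * cis (s * pi/6))" by simp
  have "Re (y * cis (s * pi/6)) \<le> cmod (y * cis (s * pi/6))" by (rule complex_Re_le_cmod)
  also have "\<dots> = cmod y" by (simp add: norm_mult)
  finally have ny: "cmod y > \<rho>" using y by simp
  have yeq: "y = of_real (cmod y) * cis (Arg y)" using rcis_cmod_Arg[of y] by (simp add: rcis_def)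
  have "Re (y * cis (s * pi/6)) = cmod y * cos (Arg y + s * pi/6)"
    by (subst yeq) (simp add: cos_add algebra_simps)
  with y \<rho> have "0 < cmod y * cos (Arg y + s * pi/6)" by linarith
  then have cpos: "cos (Arg y + s * pi/6) > 0" using ny \<rho> by (simp add: zero_less_mult_iff)
  have B: "- pi < Arg y" "Arg y \<le> pi" using Arg_bounded[of y] by auto
  have "\<bar>Arg y\<bar> < 2 * pi / 3"
  proof (rule ccontr)
    assume "\<not> \<bar>Arg y\<bar> < 2 * pi / 3"
    then have "Arg y \<ge> 2*pi/3 \<or> Arg y \<le> -(2*pi/3)" by linarith
    then have "cos (Arg y + s * pi/6) \<le> 0"
    proof
      assume a: "Arg y \<ge> 2*pi/3"
      show ?thesis by (rule cos_nonpos_aux) (use a B s in auto)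
    next
      assume a: "Arg y \<le> -(2*pi/3)"
      show ?thesis by (rule cos_nonpos_aux2) (use a B s in auto)
    qed
    with cpos show False by simp
  qed
  with ny show "y \<in> sector_dom \<rho>" by (simp add: sector_dom_def)
qed

definition phi2 :: "real \<Rightarrow> real" where "phi2 \<phi> = (pi/6 - \<phi>)/2"
definition sig :: "real \<Rightarrow> real" where "sig \<phi> = sin (phi2 \<phi>)"
definition kap :: "real \<Rightarrow> real" where "kap \<phi> = min ((1 - 4 * (sig \<phi>)^2)/4) (sig \<phi> / 2)"
definition lam :: "real \<Rightarrow> real" where "lam \<phi> = (1 / cos (\<phi> + pi/6) + 2) / 2"
definition Lc :: "real \<Rightarrow> real" where "Lc \<phi> = lam \<phi> / (2 - lam \<phi>)"

lemma const_facts: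
  assumes "0 < \<phi>" "\<phi> < pi/6"
  shows "0 < phi2 \<phi>" "phi2 \<phi> < pi/6" "0 < sig \<phi>" "sig \<phi> < 1/2" "kap \<phi> > 0"
    "kap \<phi> \<le> (1 - 4 * (sig \<phi>)^2)/4" "kap \<phi> \<le> sig \<phi> / 2"
    "cos (\<phi> + pi/6) > 1/2" "lam \<phi> * cos (\<phi> + pi/6) > 1" "lam \<phi> < 2" "lam \<phi> > 0" "Lc \<phi> \<ge> 0"
proof -
  show p0: "0 < phi2 \<phi>" using assms by (simp add: phi2_def)
  show p1: "phi2 \<phi> < pi/6" using assms by (simp add: phi2_def)
  show s0: "0 < sig \<phi>" unfolding sig_def by (rule sin_gt_zero) (use p0 p1 in auto)
  have "sin (phi2 \<phi>) < sin (pi/6)" by (rule sin_monotone_2pi) (use p0 p1 in auto)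
  then show s1: "sig \<phi> < 1/2" by (simp add: sig_def sin_30)
  have "(sig \<phi>)^2 < (1/2)^2" using s0 s1 by (intro power_strict_mono) auto
  then have "1 - 4 * (sig \<phi>)^2 > 0" by (simp add: power2_eq_square)
  then show "kap \<phi> > 0" using s0 by (simp add: kap_def)
  show "kap \<phi> \<le> (1 - 4 * (sig \<phi>)^2)/4" unfolding kap_def by (rule min.cobounded1)
  show "kap \<phi> \<le> sig \<phi> / 2" unfolding kap_def by (rule min.cobounded2)
  have "cos (pi/3) < cos (\<phi> + pi/6)" by (rule cos_monotone_0_pi) (use assms in auto)
  then show c: "cos (\<phi> + pi/6) > 1/2" by (simp add: cos_60)
  then have cp: "cos (\<phi> + pi/6) > 0" by simp
  have "lam \<phi> * cos (\<phi> + pi/6) = (1 + 2 * cos (\<phi> + pi/6)) / 2"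
    using cp by (simp add: lam_def field_simps)
  then show "lam \<phi> * cos (\<phi> + pi/6) > 1" using c by simp
  have "1 / cos (\<phi> + pi/6) < 2" using c cp by (simp add: divide_less_eq)
  then show l2: "lam \<phi> < 2" by (simp add: lam_def)
  show l0: "lam \<phi> > 0" using cp by (simp add: lam_def add_pos_pos)
  show "Lc \<phi> \<ge> 0" using l0 l2 by (simp add: Lc_def)
qed

lemma ray_est:
  fixes g :: "complex \<Rightarrow> complex" and p v w :: complex and P R \<nu> \<sigma> \<kappa> A :: real and S :: "complex set"
  assumes cont: "continuous_on S g" and ray: "\<And>r. r \<ge> 0 \<Longrightarrow> v + of_real r * w \<in> S"
   and gb: "\<And>y. y \<in> S \<Longrightarrow> cmod (g y) \<le> A * cmod y powr (-\<nu>)"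
   and re: "\<And>r. r \<ge> 0 \<Longrightarrow> Re (p * (v + of_real r * w)) = P * (R - r * \<sigma>)"
   and nm: "\<And>r. r \<ge> 0 \<Longrightarrow> cmod (v + of_real r * w) = sqrt (R^2 - 2 * R * r * \<sigma> + r^2)"
   and w1: "cmod w = 1" and A: "A \<ge> 0"
   and P: "P > 0" and R: "R > 0" and nu: "\<nu> > 0" and PR: "P * R \<ge> \<nu>"
   and s0: "0 < \<sigma>" and s1: "\<sigma> < 1/2" and k0: "\<kappa> > 0"
   and k1: "\<kappa> \<le> (1 - 4 * \<sigma>^2) / 4" and k2: "\<kappa> \<le> \<sigma> / 2"
  shows "cmod (ray_int p g v w) \<le> A * exp (P * R) * R powr (-\<nu>) * (exp 1 * (R / sqrt (\<nu> * \<kappa>)) + R / (\<nu> * \<kappa>))"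
proof -
  define h where "h = (\<lambda>r. exp (p * (v + of_real r * w)) * g (v + of_real r * w) * w)"
  define a where "a = sqrt (\<nu> * \<kappa>) / R"
  define b where "b = \<nu> * \<kappa> / R"
  define K where "K = A * exp (P * R) * R powr (-\<nu>)"
  define m where "m = (\<lambda>r::real. K * (exp 1 * exp (- a * r) + exp (- b * r)))"
  have a0: "a > 0" using nu k0 R by (simp add: a_def)
  have b0: "b > 0" using nu k0 R by (simp add: b_def)
  have K0: "K \<ge> 0" using A by (simp add: K_def)
  have ia: "((\<lambda>x::real. exp (- a * x)) has_integral exp (- a * 0) / a) {0..}"
    by (rule has_integral_exp_minus_to_infinity[OF a0])
  have ib: "((\<lambda>x::real. exp (- b * x)) has_integral exp (- b * 0) / b) {0..}"
    by (rule has_integral_exp_minus_to_infinity[OF b0])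
  have im: "(m has_integral K * (exp 1 * (1 / a) + 1 / b)) {0..}"
  proof -
    have "((\<lambda>x. exp 1 * exp (- a * x) + exp (- b * x)) has_integral (exp 1 * (exp (- a * 0) / a) + exp (- b * 0) / b)) {0..}"
      by (intro has_integral_add has_integral_mult_right ia ib)
    then have "((\<lambda>x. K * (exp 1 * exp (- a * x) + exp (- b * x))) has_integral K * (exp 1 * (exp (- a * 0) / a) + exp (- b * 0) / b)) {0..}"
      by (rule has_integral_mult_right)
    then show ?thesis by (simp add: m_def)
  qed
  have hb: "norm (h r) \<le> m r" if r: "r \<ge> 0" for r
  proof -
    have yS: "v + of_real r * w \<in> S" by (rule ray[OF r])
    have "norm (h r) = exp (Re (p * (v + of_real r * w))) * cmod (g (v + of_real r * w))"
      by (simp add: h_def norm_mult w1)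
    also have "\<dots> \<le> exp (P * (R - r * \<sigma>)) * (A * sqrt (R^2 - 2 * R * r * \<sigma> + r^2) powr (-\<nu>))"
      using gb[OF yS] unfolding re[OF r] nm[OF r] by (intro mult_left_mono) auto
    also have "exp (P * (R - r * \<sigma>)) = exp (P * R) * exp (- P * \<sigma> * r)"
      by (subst exp_add[symmetric]) (simp add: algebra_simps)
    also have "exp (P * R) * exp (- P * \<sigma> * r) * (A * sqrt (R^2 - 2 * R * r * \<sigma> + r^2) powr (-\<nu>))
       = A * exp (P * R) * (exp (- P * \<sigma> * r) * sqrt (R^2 - 2 * R * r * \<sigma> + r^2) powr (-\<nu>))"
      by (simp only: mult_ac)
    also have "\<dots> \<le> A * exp (P * R) * (R powr (-\<nu>) * (exp 1 * exp (- (sqrt (\<nu> * \<kappa>) / R) * r) + exp (- (\<nu> * \<kappa> / R) * r)))"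
      using ray_pointwise[OF P R nu PR s0 s1 k0 k1 k2 r] A by (intro mult_left_mono) auto
    also have "\<dots> = m r" by (simp add: m_def K_def a_def b_def mult_ac)
    finally show ?thesis .
  qed
  have lc: "continuous_on {0..} (\<lambda>r::real. v + of_real r * w)" by (intro continuous_intros)
  have hc: "continuous_on {0..} h"
    unfolding h_def
    by (intro continuous_on_mult continuous_on_const continuous_on_exp continuous_on_compose2[OF cont lc] lc)
       (use ray in auto)
  have mi: "m integrable_on {0..}" using im by blast
  have hi: "h integrable_on {0..}" by (rule integral_tendsto_atLeast(1)[OF hc mi hb])
  have "norm (integral {0..} h) \<le> integral {0..} m"
    by (rule integral_norm_bound_integral[OF hi mi]) (use hb in auto)
  also have "integral {0..} m = K * (exp 1 * (1 / a) + 1 / b)" using im by (rule integral_unique)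
  also have "\<dots> = A * exp (P * R) * R powr (-\<nu>) * (exp 1 * (R / sqrt (\<nu> * \<kappa>)) + R / (\<nu> * \<kappa>))"
    by (simp add: K_def a_def b_def)
  finally show ?thesis by (simp add: ray_int_def h_def)
qed

lemma ray_integrable_exp:
  fixes g :: "complex \<Rightarrow> complex" and p a w :: complex and B :: real
  assumes cont: "continuous_on S g" and ray: "\<And>r. r \<ge> 0 \<Longrightarrow> a + of_real r * w \<in> S"
    and gB: "\<And>y. y \<in> S \<Longrightarrow> cmod (g y) \<le> B" and pw: "Re (p * w) < 0"
  shows "(\<lambda>r. exp (p * (a + of_real r * w)) * g (a + of_real r * w) * w) integrable_on {0..}"
proof -
  define h where "h = (\<lambda>r. exp (p * (a + of_real r * w)) * g (a + of_real r * w) * w)"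
  define \<mu> where "\<mu> = - Re (p * w)"
  have mu: "\<mu> > 0" using pw by (simp add: \<mu>_def)
  define G where "G = (\<lambda>r::real. (B * exp (Re (p * a)) * cmod w) * exp (- \<mu> * r))"
  have "((\<lambda>x::real. exp (-\<mu>*x)) has_integral exp (-\<mu>*0)/\<mu>) {0..}"
    by (rule has_integral_exp_minus_to_infinity[OF mu])
  then have "((\<lambda>x::real. (B * exp (Re (p * a)) * cmod w) * exp (-\<mu>*x)) has_integral (B * exp (Re (p * a)) * cmod w) * (exp (-\<mu>*0)/\<mu>)) {0..}"
    by (rule has_integral_mult_right)
  then have Gi: "G integrable_on {0..}" unfolding G_def by blast
  have lc: "continuous_on {0..} (\<lambda>r::real. a + of_real r * w)" by (intro continuous_intros)
  have hc: "continuous_on {0..} h"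
    unfolding h_def
    by (intro continuous_on_mult continuous_on_const continuous_on_exp continuous_on_compose2[OF cont lc] lc)
       (use ray in auto)
  have hb: "norm (h r) \<le> G r" if r: "r \<ge> 0" for r
  proof -
    have "norm (h r) = exp (Re (p * (a + of_real r * w))) * cmod (g (a + of_real r * w)) * cmod w"
      by (simp add: h_def norm_mult)
    also have "\<dots> \<le> exp (Re (p * (a + of_real r * w))) * B * cmod w"
      using gB[OF ray[OF r]] by (intro mult_right_mono mult_left_mono) auto
    also have "Re (p * (a + of_real r * w)) = Re (p * a) + (- \<mu> * r)"
      by (simp add: \<mu>_def algebra_simps)
    also have "exp (Re (p * a) + (- \<mu> * r)) * B * cmod w = G r"
      unfolding G_def exp_add by (simp only: mult_ac)
    finally show ?thesis .
  qed
  show ?thesis using integral_tendsto_atLeast(1)[OF hc Gi hb] by (simp add: h_def)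
qed

lemma final_alg:
  fixes P \<nu> \<rho>0 lm A \<kappa> L R :: real
  assumes P: "P > 0" and nu: "\<nu> > 0" and rho: "\<rho>0 > 0" and l0: "0 < lm" and l2: "lm < 2"
    and A: "A \<ge> 0" and k: "\<kappa> > 0" and L: "L = lm / (2 - lm)" and R: "R = \<nu> / P + lm * \<rho>0"
  shows "(1/pi) * (A * exp (P * R) * R powr (-\<nu>) * (exp 1 * (R / sqrt (\<nu> * \<kappa>)) + R / (\<nu> * \<kappa>)))
     \<le> A * P powr (\<nu> - 1) * exp (2 * \<rho>0 * P) * Qf \<kappa> L \<nu>"
proof -
  define Y where "Y = exp 1 / sqrt (\<nu> * \<kappa>) + 1 / (\<nu> * \<kappa>)"
  have Y0: "Y \<ge> 0" using nu k by (simp add: Y_def)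
  have R0: "R > 0" using P nu rho l0 by (simp add: R add_pos_pos)
  have RY: "exp 1 * (R / sqrt (\<nu> * \<kappa>)) + R / (\<nu> * \<kappa>) = R * Y" by (simp add: Y_def algebra_simps)
  define x where "x = \<rho>0 * P"
  have x0: "x > 0" using rho P by (simp add: x_def)
  have PR: "P * R = \<nu> + lm * x" using P by (simp add: R x_def field_simps)
  have Rpow: "R powr (-\<nu>) \<le> (\<nu> / P) powr (-\<nu>)"
    by (rule powr_mono2') (use nu P rho l0 in \<open>auto simp: R\<close>)
  have Rpow2: "(\<nu> / P) powr (-\<nu>) = exp (- \<nu> * ln \<nu>) * P powr \<nu>"
    using nu P by (simp add: powr_def ln_div exp_add[symmetric] algebra_simps)
  have key: "exp (lm * x) * (\<nu> + lm * x) \<le> exp (2 * x) * (\<nu> + L)"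
  proof -
    have a1: "exp (lm * x) * \<nu> \<le> exp (2 * x) * \<nu>" using l2 x0 nu by (intro mult_right_mono) auto
    have "lm * x = L * ((2 - lm) * x)" using l2 by (simp add: L field_simps)
    also have "\<dots> \<le> L * exp ((2 - lm) * x)"
    proof -
      have "(2 - lm) * x \<le> 1 + (2 - lm) * x" by simp
      also have "\<dots> \<le> exp ((2 - lm) * x)" by (rule exp_ge_add_one_self)
      finally show ?thesis using l0 l2 by (intro mult_left_mono) (auto simp: L)
    qed
    finally have "exp (lm * x) * (lm * x) \<le> exp (lm * x) * (L * exp ((2 - lm) * x))"
      by (intro mult_left_mono) auto
    also have "\<dots> = exp (2 * x) * L" by (simp add: mult.left_commute exp_add[symmetric] algebra_simps)
    finally have a2: "exp (lm * x) * (lm * x) \<le> exp (2 * x) * L" .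
    show ?thesis using a1 a2 by (simp add: distrib_left)
  qed
  have "(1/pi) * (A * exp (P * R) * R powr (-\<nu>) * (exp 1 * (R / sqrt (\<nu> * \<kappa>)) + R / (\<nu> * \<kappa>)))
      = (1/pi) * A * Y * (exp (P * R) * R * R powr (-\<nu>))" unfolding RY by (simp add: mult_ac)
  also have "\<dots> \<le> (1/pi) * A * Y * (exp (P * R) * R * (exp (- \<nu> * ln \<nu>) * P powr \<nu>))"
    using Rpow Rpow2 A Y0 R0 by (intro mult_left_mono) auto
  also have "exp (P * R) * R * (exp (- \<nu> * ln \<nu>) * P powr \<nu>)
      = exp \<nu> * exp (- \<nu> * ln \<nu>) * P powr (\<nu> - 1) * (exp (lm * x) * (\<nu> + lm * x))"
  proof -
    have e1: "exp (P * R) = exp \<nu> * exp (lm * x)" unfolding PR by (simp add: exp_add)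
    have e2: "P powr \<nu> = P powr (\<nu> - 1) * P" using P by (simp add: powr_diff)
    have e3: "R * P = \<nu> + lm * x" using PR by (simp add: mult.commute)
    show ?thesis unfolding e1 e2 e3[symmetric] by (simp only: mult_ac)
  qed
  also have "(1/pi) * A * Y * (exp \<nu> * exp (- \<nu> * ln \<nu>) * P powr (\<nu> - 1) * (exp (lm * x) * (\<nu> + lm * x)))
     \<le> (1/pi) * A * Y * (exp \<nu> * exp (- \<nu> * ln \<nu>) * P powr (\<nu> - 1) * (exp (2 * x) * (\<nu> + L)))"
    using key A Y0 by (intro mult_left_mono) auto
  also have "\<dots> = A * P powr (\<nu> - 1) * exp (2 * \<rho>0 * P) * Qf \<kappa> L \<nu>"
    by (simp add: Qf_def Y_def x_def mult_ac)
  finally show ?thesis .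
qed

lemma ray_in_half:
  assumes "a * cos (\<gamma> + \<beta>) > \<rho>" "sin (\<alpha> + \<beta>) \<le> 0" "r \<ge> 0"
  shows "of_real a * cis \<gamma> + of_real r * (\<i> * cis \<alpha>) \<in> {y. \<rho> < Re (y * cis \<beta>)}"
proof -
  have "r * sin (\<alpha> + \<beta>) \<le> 0" using assms by (simp add: mult_nonneg_nonpos)
  then show ?thesis unfolding mem_Collect_eq re_formula using assms by linarith
qed

lemma main_estimate:
  fixes \<phi> \<rho>0 \<nu> A \<phi>' c :: real and g :: "complex \<Rightarrow> complex" and p :: complex
  assumes \<phi>0: "0 < \<phi>" and \<phi>1: "\<phi> < pi/6" and \<rho>: "\<rho>0 > 0" and nu: "\<nu> > 0"
    and hol: "g holomorphic_on sector_dom \<rho>0"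
    and gb: "\<And>y. y \<in> sector_dom \<rho>0 \<Longrightarrow> cmod (g y) \<le> A * cmod y powr (-\<nu>)"
    and A: "A \<ge> 0"
    and \<phi>'0: "\<phi> < \<phi>'" and \<phi>'1: "\<phi>' < pi/6" and c: "c \<ge> 2 * \<rho>0" and p: "p \<in> S_sector \<phi>"
  shows "cmod (ILT \<phi>' c g p) \<le> A * cmod p powr (\<nu> - 1) * exp (2 * \<rho>0 * cmod p) * Qf (kap \<phi>) (Lc \<phi>) \<nu>"
proof -
  note cf = const_facts[OF \<phi>0 \<phi>1]
  define P where "P = cmod p"
  define \<theta> where "\<theta> = Arg p"
  have pnz: "p \<noteq> 0" and \<theta>b: "\<bar>\<theta>\<bar> < \<phi>" using p by (auto simp: S_sector_def \<theta>_def)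
  have P0: "P > 0" using pnz by (simp add: P_def)
  have peq: "p = of_real P * cis \<theta>" using rcis_cmod_Arg[of p] by (simp add: rcis_def P_def \<theta>_def)
  define \<sigma> where "\<sigma> = sig \<phi>"
  define \<kappa> where "\<kappa> = kap \<phi>"
  define lm where "lm = lam \<phi>"
  define L where "L = Lc \<phi>"
  define \<phi>2 where "\<phi>2 = phi2 \<phi>"
  have \<sigma>eq: "\<sigma> = sin \<phi>2" by (simp add: \<sigma>_def \<phi>2_def sig_def)
  define R where "R = \<nu> / P + lm * \<rho>0"
  have lm0: "lm > 0" and lm2: "lm < 2" using cf by (auto simp: lm_def)
  have R0: "R > 0" using nu P0 lm0 \<rho> by (simp add: R_def add_pos_pos)
  have PR: "P * R \<ge> \<nu>"
  proof -
    have "P * R = \<nu> + P * lm * \<rho>0" using P0 by (simp add: R_def field_simps)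
    moreover have "P * lm * \<rho>0 \<ge> 0" using P0 lm0 \<rho> by simp
    ultimately show ?thesis by linarith
  qed
  define v where "v = of_real R * cis (- \<theta>)"
  define W1 where "W1 = \<i> * cis \<phi>'"
  define U1 where "U1 = \<i> * cis (pi - \<phi>')"
  define W2 where "W2 = \<i> * cis (\<phi>2 - \<theta>)"
  define U2 where "U2 = \<i> * cis (pi - \<phi>2 - \<theta>)"
  have W1eq: "\<i> * exp (\<i> * of_real \<phi>') = W1" by (simp add: W1_def cis_conv_exp)
  have U1eq: "- \<i> * exp (\<i> * of_real (- \<phi>')) = U1"
  proof -
    have e: "exp (\<i> * of_real (- \<phi>')) = cis (- \<phi>')" by (rule cis_conv_exp[symmetric])
    have "cis (pi - \<phi>') = - cis (- \<phi>')" by (simp add: complex_eq_iff)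
    then show ?thesis unfolding U1_def e by simp
  qed
  define Hp where "Hp = {y. \<rho>0 < Re (y * cis (- (pi/6)))}"
  define Hm where "Hm = {y. \<rho>0 < Re (y * cis (pi/6))}"
  have Hp_sub: "Hp \<subseteq> sector_dom \<rho>0"
    using half_sub_sector[OF \<rho>, of "-1"] by (simp add: Hp_def)
  have Hm_sub: "Hm \<subseteq> sector_dom \<rho>0"
    using half_sub_sector[OF \<rho>, of "1"] by (simp add: Hm_def)
  have Hp_open: "open Hp" and Hm_open: "open Hm" unfolding Hp_def Hm_def by (rule half_open)+
  have Hp_conv: "convex Hp" and Hm_conv: "convex Hm" unfolding Hp_def Hm_def by (rule half_convex)+
  have gcont: "continuous_on (sector_dom \<rho>0) g" by (rule holomorphic_on_imp_continuous_on[OF hol])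
  have holp: "g holomorphic_on Hp" by (rule holomorphic_on_subset[OF hol Hp_sub])
  have holm: "g holomorphic_on Hm" by (rule holomorphic_on_subset[OF hol Hm_sub])
  have Bb: "cmod (g y) \<le> A * \<rho>0 powr (-\<nu>)" if y: "y \<in> sector_dom \<rho>0" for y
  proof -
    have "cmod y > \<rho>0" using y by (simp add: sector_dom_def)
    then have "cmod y powr (-\<nu>) \<le> \<rho>0 powr (-\<nu>)" using nu \<rho> by (intro powr_mono2') auto
    then have "A * cmod y powr (-\<nu>) \<le> A * \<rho>0 powr (-\<nu>)" using A by (rule mult_left_mono)
    then show ?thesis using gb[OF y] by linarith
  qed
  have Bp: "\<And>y. y \<in> Hp \<Longrightarrow> cmod (g y) \<le> A * \<rho>0 powr (-\<nu>)" using Bb Hp_sub by blast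
  have Bm: "\<And>y. y \<in> Hm \<Longrightarrow> cmod (g y) \<le> A * \<rho>0 powr (-\<nu>)" using Bb Hm_sub by blast
  have s3: "sqrt 3 > (1::real)" by simp
  have T1a: "c * cos (0 + - (pi/6)) > \<rho>0" and T1b: "c * cos (0 + pi/6) > \<rho>0"
  proof -
    have "c * (sqrt 3 / 2) \<ge> 2 * \<rho>0 * (sqrt 3 / 2)" using c by (intro mult_right_mono) auto
    moreover have "2 * \<rho>0 * (sqrt 3 / 2) > \<rho>0" using s3 \<rho> by simp
    ultimately have "c * (sqrt 3 / 2) > \<rho>0" by linarith
    then show "c * cos (0 + - (pi/6)) > \<rho>0" "c * cos (0 + pi/6) > \<rho>0" by (simp_all add: cos_30)
  qed
  have T2: "sin (\<phi>' + - (pi/6)) \<le> 0"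
    using sin_less_zero[of "\<phi>' + - (pi/6)"] \<phi>'0 \<phi>'1 \<phi>0 by simp
  have T3: "sin ((pi - \<phi>') + pi/6) \<le> 0"
    by (rule sin_le_zero) (use \<phi>'0 \<phi>'1 \<phi>0 in auto)
  have cphi: "cos (\<phi> + pi/6) > 0" using cf by simp
  have Rlm: "R \<ge> lm * \<rho>0" using nu P0 by (simp add: R_def)
  have Rc: "R * cos (\<phi> + pi/6) > \<rho>0"
  proof -
    have "R * cos (\<phi> + pi/6) \<ge> lm * \<rho>0 * cos (\<phi> + pi/6)" using Rlm cphi by (intro mult_right_mono) auto
    moreover have "lm * \<rho>0 * cos (\<phi> + pi/6) = (lm * cos (\<phi> + pi/6)) * \<rho>0" by simp
    moreover have "(lm * cos (\<phi> + pi/6)) * \<rho>0 > 1 * \<rho>0" using cf \<rho> by (intro mult_strict_right_mono) (auto simp: lm_def)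
    ultimately show ?thesis by linarith
  qed
  have T4a: "R * cos (- \<theta> + - (pi/6)) > \<rho>0"
  proof -
    have "cos (\<phi> + pi/6) \<le> cos (\<theta> + pi/6)" by (rule cos_monotone_0_pi_le) (use \<theta>b \<phi>1 in auto)
    then have "R * cos (\<phi> + pi/6) \<le> R * cos (\<theta> + pi/6)" using R0 by (intro mult_left_mono) auto
    moreover have ceq: "cos (- \<theta> + - (pi/6)) = cos (\<theta> + pi/6)" by (metis cos_minus minus_add_distrib)
    ultimately show ?thesis unfolding ceq using Rc by linarith
  qed
  have T4b: "R * cos (- \<theta> + pi/6) > \<rho>0"
  proof -
    have "cos (\<phi> + pi/6) \<le> cos (- \<theta> + pi/6)" by (rule cos_monotone_0_pi_le) (use \<theta>b \<phi>1 in auto)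
    then have "R * cos (\<phi> + pi/6) \<le> R * cos (- \<theta> + pi/6)" using R0 by (intro mult_left_mono) auto
    then show ?thesis using Rc by linarith
  qed
  have \<phi>2v: "\<phi>2 = (pi/6 - \<phi>) / 2" by (simp add: \<phi>2_def phi2_def)
  have \<theta>l: "- \<phi> < \<theta>" and \<theta>u: "\<theta> < \<phi>" using \<theta>b by auto
  have T5: "sin ((\<phi>2 - \<theta>) + - (pi/6)) \<le> 0"
  proof -
    have a: "- pi/2 < (\<phi>2 - \<theta>) + - (pi/6)" using \<theta>u \<phi>1 \<phi>0 \<phi>2v pi_gt_zero by (simp add: field_simps)
    have b: "(\<phi>2 - \<theta>) + - (pi/6) < 0" using \<theta>l \<phi>1 \<phi>0 \<phi>2v by (simp add: field_simps)
    show ?thesis using sin_less_zero[OF a b] by linarith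
  qed
  have T6: "sin ((pi - \<phi>2 - \<theta>) + pi/6) \<le> 0"
    by (rule sin_le_zero) (use \<theta>b \<phi>1 \<phi>0 \<phi>2v in auto)
  have D1: "sin (\<theta> + \<phi>') > 0" by (rule sin_gt_zero) (use \<theta>b \<phi>'0 \<phi>'1 in auto)
  have D2: "sin (\<theta> + (pi - \<phi>')) > 0" by (rule sin_gt_zero) (use \<theta>b \<phi>'0 \<phi>'1 in auto)
  have \<sigma>0: "\<sigma> > 0" using cf by (simp add: \<sigma>_def)
  have D3: "sin (\<theta> + (\<phi>2 - \<theta>)) > 0" using \<sigma>0 \<sigma>eq by simp
  have D4: "sin (\<theta> + (pi - \<phi>2 - \<theta>)) > 0" using \<sigma>0 \<sigma>eq by simp
  have rayW1: "of_real c + of_real r * W1 \<in> Hp" if r: "r \<ge> 0" for r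
  proof -
    have "of_real c + of_real r * W1 = of_real c * cis 0 + of_real r * (\<i> * cis \<phi>')" by (simp add: W1_def)
    note eq = this
    show ?thesis unfolding Hp_def eq by (rule ray_in_half[OF T1a T2 r])
  qed
  have rayU1: "of_real c + of_real r * U1 \<in> Hm" if r: "r \<ge> 0" for r
  proof -
    have "of_real c + of_real r * U1 = of_real c * cis 0 + of_real r * (\<i> * cis (pi - \<phi>'))" by (simp add: U1_def)
    note eq = this
    show ?thesis unfolding Hm_def eq by (rule ray_in_half[OF T1b T3 r])
  qed
  have rayW2: "v + of_real r * W2 \<in> Hp" if r: "r \<ge> 0" for r
  proof -
    have "v + of_real r * W2 = of_real R * cis (- \<theta>) + of_real r * (\<i> * cis (\<phi>2 - \<theta>))" by (simp add: v_def W2_def)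
    note eq = this
    show ?thesis unfolding Hp_def eq by (rule ray_in_half[OF T4a T5 r])
  qed
  have rayU2: "v + of_real r * U2 \<in> Hm" if r: "r \<ge> 0" for r
  proof -
    have "v + of_real r * U2 = of_real R * cis (- \<theta>) + of_real r * (\<i> * cis (pi - \<phi>2 - \<theta>))" by (simp add: v_def U2_def)
    note eq = this
    show ?thesis unfolding Hm_def eq by (rule ray_in_half[OF T4b T6 r])
  qed
  have pW1: "Re (p * W1) < 0" using D1 P0 unfolding peq W1_def re_mult_formula by simp
  have pU1: "Re (p * U1) < 0" using D2 P0 unfolding peq U1_def re_mult_formula by simp
  have pW2: "Re (p * W2) < 0" using D3 P0 unfolding peq W2_def re_mult_formula by simp
  have pU2: "Re (p * U2) < 0" using D4 P0 unfolding peq U2_def re_mult_formula by simp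
  have i1: "(\<lambda>r. exp (p * (of_real c + of_real r * W1)) * g (of_real c + of_real r * W1) * W1) integrable_on {0..}"
    by (rule ray_integrable_exp[OF gcont _ Bb pW1]) (use rayW1 Hp_sub in blast)
  have i2: "(\<lambda>r. exp (p * (of_real c + of_real r * U1)) * g (of_real c + of_real r * U1) * U1) integrable_on {0..}"
    by (rule ray_integrable_exp[OF gcont _ Bb pU1]) (use rayU1 Hm_sub in blast)
  have split: "ILT \<phi>' c g p = (1 / (2 * of_real pi * \<i>)) * (ray_int p g (of_real c) W1 - ray_int p g (of_real c) U1)"
    using ILT_split[where \<phi>'="\<phi>'" and c=c and p=p and g=g, unfolded W1eq U1eq] i1 i2 by blast
  have dp: "ray_int p g (of_real c) W1 - ray_int p g v W2 =
     integral {0..1} (\<lambda>t. exp (p * (of_real c + of_real t * (v - of_real c))) * g (of_real c + of_real t * (v - of_real c)) * (v - of_real c))"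
    by (rule deform[OF Hp_open Hp_conv holp rayW1 rayW2 Bp pW1 pW2])
  have dm: "ray_int p g (of_real c) U1 - ray_int p g v U2 =
     integral {0..1} (\<lambda>t. exp (p * (of_real c + of_real t * (v - of_real c))) * g (of_real c + of_real t * (v - of_real c)) * (v - of_real c))"
    by (rule deform[OF Hm_open Hm_conv holm rayU1 rayU2 Bm pU1 pU2])
  have eqI: "ray_int p g (of_real c) W1 - ray_int p g (of_real c) U1 = ray_int p g v W2 - ray_int p g v U2"
    using dp dm by (simp add: algebra_simps)
  have kf: "\<kappa> > 0" "\<kappa> \<le> (1 - 4 * \<sigma>^2) / 4" "\<kappa> \<le> \<sigma> / 2" "\<sigma> < 1/2"
    using cf by (simp_all add: \<kappa>_def \<sigma>_def)
  define X where "X = A * exp (P * R) * R powr (-\<nu>) * (exp 1 * (R / sqrt (\<nu> * \<kappa>)) + R / (\<nu> * \<kappa>))"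
  have estW2: "cmod (ray_int p g v W2) \<le> X"
    unfolding X_def
  proof (rule ray_est[OF gcont _ gb _ _ _ A P0 R0 nu PR \<sigma>0 kf(4) kf(1) kf(2) kf(3)])
    show "v + of_real r * W2 \<in> sector_dom \<rho>0" if "r \<ge> 0" for r using rayW2[OF that] Hp_sub by blast
    show "Re (p * (v + of_real r * W2)) = P * (R - r * \<sigma>)" for r
    proof -
      have "p * (v + of_real r * W2) = of_real P * cis \<theta> * (of_real R * cis (- \<theta>) + of_real r * (\<i> * cis (\<phi>2 - \<theta>)))"
        by (simp add: peq v_def W2_def)
      note eq = this
      show ?thesis unfolding eq re_formula2 by (simp add: \<sigma>eq)
    qed
    show "cmod (v + of_real r * W2) = sqrt (R^2 - 2 * R * r * \<sigma> + r^2)" for r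
    proof -
      have "v + of_real r * W2 = of_real R * cis (- \<theta>) + of_real r * (\<i> * cis (\<phi>2 - \<theta>))"
        by (simp add: v_def W2_def)
      note eq = this
      show ?thesis unfolding eq norm_formula by (simp add: \<sigma>eq)
    qed
    show "cmod W2 = 1" by (simp add: W2_def norm_mult)
  qed
  have estU2: "cmod (ray_int p g v U2) \<le> X"
    unfolding X_def
  proof (rule ray_est[OF gcont _ gb _ _ _ A P0 R0 nu PR \<sigma>0 kf(4) kf(1) kf(2) kf(3)])
    show "v + of_real r * U2 \<in> sector_dom \<rho>0" if "r \<ge> 0" for r using rayU2[OF that] Hm_sub by blast
    show "Re (p * (v + of_real r * U2)) = P * (R - r * \<sigma>)" for r
    proof -
      have "p * (v + of_real r * U2) = of_real P * cis \<theta> * (of_real R * cis (- \<theta>) + of_real r * (\<i> * cis (pi - \<phi>2 - \<theta>)))"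
        by (simp add: peq v_def U2_def)
      note eq = this
      show ?thesis unfolding eq re_formula2 by (simp add: \<sigma>eq)
    qed
    show "cmod (v + of_real r * U2) = sqrt (R^2 - 2 * R * r * \<sigma> + r^2)" for r
    proof -
      have "v + of_real r * U2 = of_real R * cis (- \<theta>) + of_real r * (\<i> * cis (pi - \<phi>2 - \<theta>))"
        by (simp add: v_def U2_def)
      note eq = this
      show ?thesis unfolding eq norm_formula by (simp add: \<sigma>eq)
    qed
    show "cmod U2 = 1" by (simp add: U2_def norm_mult)
  qed
  have "cmod (ILT \<phi>' c g p) = (1 / (2 * pi)) * cmod (ray_int p g v W2 - ray_int p g v U2)"
    unfolding split eqI by (simp add: norm_mult norm_divide)
  also have "\<dots> \<le> (1 / (2 * pi)) * (X + X)"
    using norm_triangle_ineq4[of "ray_int p g v W2" "ray_int p g v U2"] estW2 estU2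
    by (intro mult_left_mono) auto
  also have "\<dots> = (1/pi) * X" by simp
  also have "\<dots> \<le> A * P powr (\<nu> - 1) * exp (2 * \<rho>0 * P) * Qf \<kappa> L \<nu>"
    unfolding X_def
    by (rule final_alg[OF P0 nu \<rho> lm0 lm2 A kf(1)]) (simp_all add: L_def Lc_def lm_def R_def)
  finally show ?thesis by (simp add: P_def \<kappa>_def L_def)
qed

lemma apply_one:
  fixes \<phi> \<rho>0 \<nu> A \<phi>' c K :: real and g :: "complex \<Rightarrow> complex" and p :: complex
  assumes \<phi>0: "0 < \<phi>" and \<phi>1: "\<phi> < pi/6" and \<rho>: "\<rho>0 > 0" and nu: "\<nu> > 0"
    and an: "g analytic_on sector_dom \<rho>0"
    and gb: "\<forall>y\<in>sector_dom \<rho>0. cmod (y powr of_real \<nu> * g y) < A"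
    and \<phi>'0: "\<phi> < \<phi>'" and \<phi>'1: "\<phi>' < pi/6" and c: "c \<ge> 2 * \<rho>0" and p: "p \<in> S_sector \<phi>"
    and K: "K \<ge> M1 (kap \<phi>) (Lc \<phi>) * (1 + 1 / \<nu>^3)"
  shows "cmod (ILT \<phi>' c g p) < (2 * K) / Gamma \<nu> * A * cmod p powr (\<nu> - 1) * exp (2 * \<rho>0 * cmod p)"
proof -
  note cf = const_facts[OF \<phi>0 \<phi>1]
  have hol: "g holomorphic_on sector_dom \<rho>0" by (rule analytic_imp_holomorphic[OF an])
  have gb': "cmod (g y) \<le> A * cmod y powr (-\<nu>)" if y: "y \<in> sector_dom \<rho>0" for y
  proof -
    have "cmod y > \<rho>0" using y by (simp add: sector_dom_def)
    then have ny: "cmod y > 0" using \<rho> by linarith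
    have "cmod (y powr of_real \<nu> * g y) = cmod y powr \<nu> * cmod (g y)"
      by (simp add: norm_mult norm_powr_real_powr')
    moreover have "cmod (y powr of_real \<nu> * g y) < A" using gb y by blast
    ultimately have "cmod y powr \<nu> * cmod (g y) < A" by simp
    then have "cmod (g y) < A / cmod y powr \<nu>" using ny by (simp add: field_simps)
    then show ?thesis by (simp add: powr_minus_divide)
  qed
  have yin: "of_real (\<rho>0 + 1) \<in> sector_dom \<rho>0"
  proof -
    have a: "Arg (complex_of_real (\<rho>0 + 1)) = 0" using \<rho> by (subst Arg_of_real) auto
    have n: "cmod (complex_of_real (\<rho>0 + 1)) = \<rho>0 + 1" using \<rho> by (subst norm_of_real) auto
    show ?thesis unfolding sector_dom_def mem_Collect_eq a n using pi_gt_zero by simp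
  qed
  have A0: "A > 0" using gb yin by (metis norm_ge_zero le_less_trans)
  have P0: "cmod p > 0" using p by (simp add: S_sector_def)
  have est: "cmod (ILT \<phi>' c g p) \<le> A * cmod p powr (\<nu> - 1) * exp (2 * \<rho>0 * cmod p) * Qf (kap \<phi>) (Lc \<phi>) \<nu>"
    by (rule main_estimate[OF \<phi>0 \<phi>1 \<rho> nu hol gb' _ \<phi>'0 \<phi>'1 c p]) (use A0 in auto)
  have G0: "Gamma \<nu> > 0" using nu by simp
  have "Gamma \<nu> * Qf (kap \<phi>) (Lc \<phi>) \<nu> \<le> K"
    using Gamma_Qf[OF cf(5) cf(12) nu] K by linarith
  then have QK: "Qf (kap \<phi>) (Lc \<phi>) \<nu> \<le> K / Gamma \<nu>" using G0 by (simp add: field_simps)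
  have Kpos: "K > 0"
  proof -
    have "M1 (kap \<phi>) (Lc \<phi>) > 0" by (rule M1_pos[OF cf(5) cf(12)])
    moreover have "1 + 1 / \<nu>^3 > 0" using nu by (simp add: add_pos_pos)
    ultimately show ?thesis using K by (smt (verit) mult_pos_pos)
  qed
  define Z where "Z = A * cmod p powr (\<nu> - 1) * exp (2 * \<rho>0 * cmod p)"
  have Z0: "Z > 0" using A0 P0 by (simp add: Z_def)
  have "cmod (ILT \<phi>' c g p) \<le> Z * Qf (kap \<phi>) (Lc \<phi>) \<nu>" using est by (simp add: Z_def)
  also have "\<dots> \<le> Z * (K / Gamma \<nu>)" using QK Z0 by (intro mult_left_mono) auto
  also have "\<dots> < Z * (2 * K / Gamma \<nu>)" using Z0 Kpos G0 by (intro mult_strict_left_mono) (auto simp: divide_strict_right_mono)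
  also have "\<dots> = (2 * K) / Gamma \<nu> * A * cmod p powr (\<nu> - 1) * exp (2 * \<rho>0 * cmod p)"
    by (simp add: Z_def mult_ac)
  finally show ?thesis .
qed

theorem corollary4:
  fixes \<phi> :: real
  assumes "0 < \<phi>" and "\<phi> < pi / 6"
  shows "\<exists>(C1 :: real \<Rightarrow> real) (C2 :: real).
    \<forall>(\<rho>0 :: real) (T :: real) (A_r :: real) (A_b :: real) (\<alpha>_r :: real) (\<beta> :: real)
      (\<alpha> :: nat \<Rightarrow> real) (r :: complex \<Rightarrow> real \<Rightarrow> complex)
      (b :: nat \<Rightarrow> nat \<Rightarrow> complex \<Rightarrow> real \<Rightarrow> complex).
      (\<rho>0 > 0 \<and> T > 0 \<and> \<alpha>_r \<ge> 1 \<and> \<beta> > 0 \<and> (\<forall>j\<le>3. \<alpha> j > 0) \<and>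
       (\<forall>t\<in>{0..T}. (\<lambda>y. r y t) analytic_on sector_dom \<rho>0 \<and>
          (\<forall>y\<in>sector_dom \<rho>0. cmod (y powr of_real \<alpha>_r * r y t) < A_r)) \<and>
       (\<forall>j\<le>3. \<forall>k. \<forall>t\<in>{0..T}. (\<lambda>y. b j k y t) analytic_on sector_dom \<rho>0 \<and>
          (\<forall>y\<in>sector_dom \<rho>0. cmod (y powr of_real (\<alpha> j + real k * \<beta>) * b j k y t) < A_b)))
      \<longrightarrow>
      (\<forall>\<phi>'. \<phi> < \<phi>' \<and> \<phi>' < pi / 6 \<longrightarrow>
        (\<exists>c0. \<forall>c\<ge>c0. \<forall>p\<in>S_sector \<phi>. \<forall>t\<in>{0..T}.
           (\<forall>j\<le>3. \<forall>k. cmod (ILT \<phi>' c (\<lambda>y. b j k y t) p)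
               < C1 (\<alpha> j) / Gamma (\<alpha> j + real k * \<beta>) * A_b
                 * cmod p powr (real k * \<beta> + \<alpha> j - 1) * exp (2 * \<rho>0 * cmod p)) \<and>
           cmod (ILT \<phi>' c (\<lambda>y. r y t) p)
               < C2 / Gamma \<alpha>_r * A_r * cmod p powr (\<alpha>_r - 1) * exp (2 * \<rho>0 * cmod p)))"
proof -
  note \<phi>0 = assms(1) and \<phi>1 = assms(2)
  define M where "M = M1 (kap \<phi>) (Lc \<phi>)"
  have M0: "M > 0" unfolding M_def using const_facts[OF \<phi>0 \<phi>1] by (intro M1_pos) auto
  show ?thesis
  proof (rule exI[of _ "\<lambda>a. 2 * (M * (1 + 1 / a^3))"], rule exI[of _ "2 * (2 * M)"], intro allI impI)
    fix \<rho>0 T A_r A_b \<alpha>_r \<beta> :: real and \<alpha> :: "nat \<Rightarrow> real" and r :: "complex \<Rightarrow> real \<Rightarrow> complex"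
      and b :: "nat \<Rightarrow> nat \<Rightarrow> complex \<Rightarrow> real \<Rightarrow> complex" and \<phi>' :: real
    assume H: "\<rho>0 > 0 \<and> T > 0 \<and> \<alpha>_r \<ge> 1 \<and> \<beta> > 0 \<and> (\<forall>j\<le>3. \<alpha> j > 0) \<and>
       (\<forall>t\<in>{0..T}. (\<lambda>y. r y t) analytic_on sector_dom \<rho>0 \<and>
          (\<forall>y\<in>sector_dom \<rho>0. cmod (y powr of_real \<alpha>_r * r y t) < A_r)) \<and>
       (\<forall>j\<le>3. \<forall>k. \<forall>t\<in>{0..T}. (\<lambda>y. b j k y t) analytic_on sector_dom \<rho>0 \<and>
          (\<forall>y\<in>sector_dom \<rho>0. cmod (y powr of_real (\<alpha> j + real k * \<beta>) * b j k y t) < A_b))"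
    assume P': "\<phi> < \<phi>' \<and> \<phi>' < pi / 6"
    have \<rho>: "\<rho>0 > 0" and ar: "\<alpha>_r \<ge> 1" and be: "\<beta> > 0" and al: "\<And>j::nat. j \<le> 3 \<Longrightarrow> \<alpha> j > 0"
      using H by auto
    show "\<exists>c0. \<forall>c\<ge>c0. \<forall>p\<in>S_sector \<phi>. \<forall>t\<in>{0..T}.
           (\<forall>j\<le>3. \<forall>k. cmod (ILT \<phi>' c (\<lambda>y. b j k y t) p)
               < 2 * (M * (1 + 1 / (\<alpha> j)^3)) / Gamma (\<alpha> j + real k * \<beta>) * A_b
                 * cmod p powr (real k * \<beta> + \<alpha> j - 1) * exp (2 * \<rho>0 * cmod p)) \<and>
           cmod (ILT \<phi>' c (\<lambda>y. r y t) p)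
               < 2 * (2 * M) / Gamma \<alpha>_r * A_r * cmod p powr (\<alpha>_r - 1) * exp (2 * \<rho>0 * cmod p)"
    proof (intro exI[of _ "2 * \<rho>0"] allI impI ballI conjI)
      fix c p t assume c: "c \<ge> 2 * \<rho>0" and p: "p \<in> S_sector \<phi>" and t: "t \<in> {0..T}"
      show "cmod (ILT \<phi>' c (\<lambda>y. r y t) p)
               < 2 * (2 * M) / Gamma \<alpha>_r * A_r * cmod p powr (\<alpha>_r - 1) * exp (2 * \<rho>0 * cmod p)"
      proof (rule apply_one[OF \<phi>0 \<phi>1 \<rho> _ _ _ _ _ c p])
        show "0 < \<alpha>_r" using ar by simp
        show "(\<lambda>y. r y t) analytic_on sector_dom \<rho>0" using H t by blast
        show "\<forall>y\<in>sector_dom \<rho>0. cmod (y powr of_real \<alpha>_r * r y t) < A_r" using H t by blast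
        show "\<phi> < \<phi>'" "\<phi>' < pi/6" using P' by auto
        have "1 / \<alpha>_r^3 \<le> 1" using ar by (simp add: divide_le_eq one_le_power)
        then have "1 + 1 / \<alpha>_r^3 \<le> 2" by simp
        then show "M1 (kap \<phi>) (Lc \<phi>) * (1 + 1 / \<alpha>_r^3) \<le> 2 * M"
          using M0 unfolding M_def by (simp add: mult_left_mono mult.commute)
      qed
      fix j k :: nat assume j: "j \<le> 3"
      define \<nu> where "\<nu> = \<alpha> j + real k * \<beta>"
      have aj: "\<alpha> j > 0" using al[OF j] .
      have nu_ge: "\<nu> \<ge> \<alpha> j" using be by (simp add: \<nu>_def)
      have nu0: "\<nu> > 0" using aj nu_ge by linarith
      have ex: "\<nu> - 1 = real k * \<beta> + \<alpha> j - 1" by (simp add: \<nu>_def)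
      have main: "cmod (ILT \<phi>' c (\<lambda>y. b j k y t) p)
               < 2 * (M * (1 + 1 / (\<alpha> j)^3)) / Gamma \<nu> * A_b * cmod p powr (\<nu> - 1) * exp (2 * \<rho>0 * cmod p)"
      proof (rule apply_one[OF \<phi>0 \<phi>1 \<rho> nu0 _ _ _ _ c p])
        show "(\<lambda>y. b j k y t) analytic_on sector_dom \<rho>0" using H t j by blast
        show "\<forall>y\<in>sector_dom \<rho>0. cmod (y powr of_real \<nu> * b j k y t) < A_b" using H t j by (simp add: \<nu>_def)
        show "\<phi> < \<phi>'" "\<phi>' < pi/6" using P' by auto
        have "\<alpha> j ^ 3 \<le> \<nu> ^ 3" using aj nu_ge by (intro power_mono) auto
        then have "1 / \<nu>^3 \<le> 1 / \<alpha> j ^ 3" using aj nu0 by (intro divide_left_mono) auto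
        then show "M1 (kap \<phi>) (Lc \<phi>) * (1 + 1 / \<nu>^3) \<le> M * (1 + 1 / (\<alpha> j)^3)"
          using M0 unfolding M_def by (intro mult_left_mono) auto
      qed
      then show "cmod (ILT \<phi>' c (\<lambda>y. b j k y t) p)
               < 2 * (M * (1 + 1 / (\<alpha> j)^3)) / Gamma (\<alpha> j + real k * \<beta>) * A_b
                 * cmod p powr (real k * \<beta> + \<alpha> j - 1) * exp (2 * \<rho>0 * cmod p)"
        unfolding ex by (simp only: \<nu>_def)
    qed
  qed
qed

end
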